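(* Let $G=G_0=(V,E)$ be an infinite, connected, quasi-transitive, cubic graph with fundamental domain $W$, let $X\subseteq E$ be the set of edges incident to vertices of $W$, let $\phi$ be a local transformation and $G_1=\phi(G)$, in which the mid-edges of $E$ are regarded as mid-edges of $G_1$. Define, for $x>0$, \[ Z_0(x)=\sum_{\pi\in\Sigma_0}x^{|\pi|},\qquad Z_1^*(x)=\sum_{\pi\in\Sigma_1^*}x^{|\pi|}, \] where $\Sigma_0$ is the set of SAWs on $G_0$ starting at mid-edges of $X$, and $\Sigma_1^*$ is the set of SAWs on $G_1$ starting at mid-edges of $X$ and ending at mid-edges of $E$. Then $Z_0(g_\phi(x))=Z_1^*(x)$ for all $x>0$ (as identities in $[0,\infty]$). Moreover, letting $Z_1(x)=\sum_{\pi\in\Sigma_1}x^{|\pi|}$ with $\Sigma_1$ the set of SAWs on $G_1$ starting at mid-edges of $X_1$ (the edges of $G_1$ incident to vertices of the gadgets $\phi(v)$, $v\in W$), one has $Z_1(x)<\infty$ if and only if $Z_1^*(x)<\infty$.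
   Context: All graphs are simple (no loops, no multiple edges). A graph $G=(V,E)$ is quasi-transitive if there is a finite $W\subseteq V$ such that every vertex is mapped into $W$ by some automorphism of $G$ (such $W$ is a fundamental domain); it is cubic if every vertex has degree $3$. Local transformation: a local transformation $\phi$ acts at a degree-$3$ vertex $v$ of a simple graph by replacing $v$ with a finite connected graph (the gadget) $\phi(v)$ having three distinct distinguished outer vertices (ports) $w_1,w_2,w_3$, each port being attached to exactly one of the three edges formerly incident to $v$ (one port per edge). It is required that (i) all gadgets $\phi(v)$ are isomorphic via isomorphisms sending ports to ports, and (ii) some subgroup of the automorphism group of $\phi(v)$ preserves the set $\{w_1,w_2,w_3\}$ and acts transitively on it. $\phi(G)$ denotes the graph obtained by applying $\phi$ at every degree-$3$ vertex of $G$. Mid-edge convention: each edge $e$ is identified with a point at its middle (also denoted $e$). Walks may start and end at mid-edges; such a walk is self-avoiding (a SAW) if it visits no vertex and no mid-edge more than once, and its length $|\pi|$ is the number of vertices it visits. Gadget series: for a degree-$3$ vertex $v$ with incident edges $e_1,e_2,e_3$, $g(x)=g_\phi(x)=\sum_{\pi}x^{|\pi|}$, where the sum is over all SAWs $\pi$ that start at the mid-edge of $e_1$, end at the mid-edge of $e_2$, and otherwise visit only vertices of the gadget $\phi(v)$. This polynomial does not depend on $v$ nor on the chosen pair of incident edges. *)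

theory Defs
  imports "HOL-Analysis.Analysis" "HOL-Algebra.Bij"
begin

definition simple_graph :: "'a set \<Rightarrow> 'a set set \<Rightarrow> bool" where
  "simple_graph V E \<longleftrightarrow> (\<forall>e\<in>E. \<exists>u v. u \<in> V \<and> v \<in> V \<and> u \<noteq> v \<and> e = {u, v})"

definition adj :: "'a set set \<Rightarrow> 'a \<Rightarrow> 'a \<Rightarrow> bool" where
  "adj E u v \<longleftrightarrow> {u, v} \<in> E"

definition connected_graph :: "'a set \<Rightarrow> 'a set set \<Rightarrow> bool" where
  "connected_graph V E \<longleftrightarrow> V \<noteq> {} \<and> (\<forall>u\<in>V. \<forall>v\<in>V. (adj E)\<^sup>*\<^sup>* u v)"

definition incident_edges :: "'a set set \<Rightarrow> 'a \<Rightarrow> 'a set set" where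
  "incident_edges E v = {e \<in> E. v \<in> e}"

definition cubic :: "'a set \<Rightarrow> 'a set set \<Rightarrow> bool" where
  "cubic V E \<longleftrightarrow> (\<forall>v\<in>V. card (incident_edges E v) = 3)"

definition graph_automorphism :: "'a set \<Rightarrow> 'a set set \<Rightarrow> ('a \<Rightarrow> 'a) \<Rightarrow> bool" where
  "graph_automorphism V E f \<longleftrightarrow> bij_betw f V V \<and>
     (\<forall>u\<in>V. \<forall>w\<in>V. {u, w} \<in> E \<longleftrightarrow> {f u, f w} \<in> E)"

text \<open>W is a fundamental domain: finite, and every vertex is mapped into W by an automorphism.
  (G is quasi-transitive iff such a W exists.)\<close>
definition fundamental_domain :: "'a set \<Rightarrow> 'a set set \<Rightarrow> 'a set \<Rightarrow> bool" where
  "fundamental_domain V E W \<longleftrightarrow> finite W \<and> W \<subseteq> V \<and>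
     (\<forall>v\<in>V. \<exists>f. graph_automorphism V E f \<and> f v \<in> W)"

text \<open>A walk from mid-edge e through the vertices vs (in order) to mid-edge f.
  Its length is the number of vertices visited, i.e. length vs.\<close>

definition walk_edges :: "'a list \<Rightarrow> 'a set list" where
  "walk_edges vs = map (\<lambda>i. {vs ! i, vs ! Suc i}) [0..<length vs - 1]"

definition saw :: "'a set set \<Rightarrow> 'a set \<Rightarrow> 'a list \<Rightarrow> 'a set \<Rightarrow> bool" where
  "saw E e vs f \<longleftrightarrow> e \<in> E \<and> f \<in> E \<and> distinct vs \<and>
     (vs = [] \<longrightarrow> e = f) \<and>
     (vs \<noteq> [] \<longrightarrow> hd vs \<in> e \<and> last vs \<in> f \<and> set (walk_edges vs) \<subseteq> E \<and>
        distinct (e # walk_edges vs @ [f]))"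

definition saw_gen :: "'a set set \<Rightarrow> ('a set \<times> 'a list \<times> 'a set) set" where
  "saw_gen E = {(e, vs, f). saw E e vs f}"

definition walk_series :: "('a set \<times> 'a list \<times> 'a set) set \<Rightarrow> real \<Rightarrow> ennreal" where
  "walk_series S x = (\<Sum>\<^sub>\<infinity>\<pi>\<in>S. ennreal x ^ length (fst (snd \<pi>)))"

definition gadget :: "'g set \<Rightarrow> 'g set set \<Rightarrow> 'g \<Rightarrow> 'g \<Rightarrow> 'g \<Rightarrow> bool" where
  "gadget K EH w1 w2 w3 \<longleftrightarrow> finite K \<and> simple_graph K EH \<and> connected_graph K EH \<and>
     w1 \<in> K \<and> w2 \<in> K \<and> w3 \<in> K \<and> w1 \<noteq> w2 \<and> w1 \<noteq> w3 \<and> w2 \<noteq> w3 \<and>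
     (\<exists>\<Gamma>. subgroup \<Gamma> (BijGroup K) \<and>
        (\<forall>\<gamma>\<in>\<Gamma>. graph_automorphism K EH \<gamma> \<and> \<gamma> ` {w1, w2, w3} = {w1, w2, w3}) \<and>
        (\<forall>p\<in>{w1, w2, w3}. \<forall>q\<in>{w1, w2, w3}. \<exists>\<gamma>\<in>\<Gamma>. \<gamma> p = q))"

definition port_assignment ::
  "'v set \<Rightarrow> 'v set set \<Rightarrow> 'g set \<Rightarrow> ('v \<Rightarrow> 'v set \<Rightarrow> 'g) \<Rightarrow> bool" where
  "port_assignment V E P port \<longleftrightarrow> (\<forall>v\<in>V. bij_betw (port v) (incident_edges E v) P)"

text \<open>The graph \<phi>(G): vertex v is replaced by the copy {v} \<times> K of the gadget; the edge
  e = {u,v} of G becomes the edge joining (u, port u e) and (v, port v e).\<close>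
definition lt_vertices :: "'v set \<Rightarrow> 'g set \<Rightarrow> ('v \<times> 'g) set" where
  "lt_vertices V K = V \<times> K"

definition lt_edge :: "('v \<Rightarrow> 'v set \<Rightarrow> 'g) \<Rightarrow> 'v set \<Rightarrow> ('v \<times> 'g) set" where
  "lt_edge port e = (\<lambda>u. (u, port u e)) ` e"

definition lt_edges ::
  "'v set \<Rightarrow> 'v set set \<Rightarrow> 'g set set \<Rightarrow> ('v \<Rightarrow> 'v set \<Rightarrow> 'g) \<Rightarrow> ('v \<times> 'g) set set" where
  "lt_edges V E EH port =
     {{(v, a), (v, b)} | v a b. v \<in> V \<and> {a, b} \<in> EH} \<union> lt_edge port ` E"

text \<open>The gadget series g_\<phi>(x): SAWs in \<phi>(G) from the mid-edge of e1 to the mid-edge of e2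
  (two distinct edges incident to a vertex v of G), visiting only vertices of \<phi>(v).
  Computed at some vertex v and some pair of incident edges (by the paper it does not
  depend on these choices).\<close>
definition gadget_series ::
  "'v set \<Rightarrow> 'v set set \<Rightarrow> 'g set \<Rightarrow> 'g set set \<Rightarrow> ('v \<Rightarrow> 'v set \<Rightarrow> 'g) \<Rightarrow> real \<Rightarrow> real" where
  "gadget_series V E K EH port x =
     (let v = (SOME v. v \<in> V);
          (e1, e2) = (SOME (e1, e2). e1 \<in> incident_edges E v \<and> e2 \<in> incident_edges E v \<and> e1 \<noteq> e2)
      in \<Sum>(e, vs, f) \<in> {(e, vs, f). saw (lt_edges V E EH port) e vs f \<and>
                            e = lt_edge port e1 \<and> f = lt_edge port e2 \<and> set vs \<subseteq> {v} \<times> K}.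
           x ^ length vs)"

end

theory Submission
  imports Defs
begin


lemma walk_edges_Nil[simp]: "walk_edges [] = []"
  by (simp add: walk_edges_def)

lemma walk_edges_single[simp]: "walk_edges [a] = []"
  by (simp add: walk_edges_def)

lemma walk_edges_Cons2[simp]: "walk_edges (a#b#xs) = {a,b} # walk_edges (b#xs)"
proof -
  have "[0..<length (a#b#xs) - 1] = 0 # map Suc [0..<length (b#xs) - 1]"
    by (simp add: upt_conv_Cons map_Suc_upt del: upt_Suc)
  then show ?thesis by (simp add: walk_edges_def)
qed

lemma walk_edges_map: "walk_edges (map g xs) = map ((`) g) (walk_edges xs)"
  by (induction xs rule: induct_list012) auto

lemma walk_edges_append:
  "xs \<noteq> [] \<Longrightarrow> ys \<noteq> [] \<Longrightarrow> walk_edges (xs @ ys) = walk_edges xs @ {last xs, hd ys} # walk_edges ys"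
proof (induction xs rule: induct_list012)
  case (3 x y zs)
  then show ?case by (cases ys) auto
next
  case (2 x) then show ?case by (cases ys) auto
qed auto

lemma walk_edges_rev: "walk_edges (rev xs) = rev (walk_edges xs)"
proof (induction xs rule: induct_list012)
  case (3 x y zs)
  have "walk_edges (rev (x#y#zs)) = walk_edges (rev (y#zs) @ [x])" by simp
  also have "\<dots> = walk_edges (rev (y#zs)) @ [{y, x}]"
    by (subst walk_edges_append) (auto simp: last_rev)
  finally show ?case using 3 by (simp add: insert_commute)
qed auto

lemma walk_edges_mem: "E' \<in> set (walk_edges xs) \<Longrightarrow> \<exists>a b. E' = {a,b} \<and> a \<in> set xs \<and> b \<in> set xs"
proof (induction xs rule: induct_list012)
  case (3 x y zs)
  show ?case
  proof (cases "E' = {x,y}")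
    case True then show ?thesis by force
  next
    case False
    then have "E' \<in> set (walk_edges (y#zs))" using 3(3) by simp
    then obtain a b where "E' = {a,b}" "a \<in> set (y#zs)" "b \<in> set (y#zs)" using 3(2) by blast
    then show ?thesis by (intro exI[of _ a] exI[of _ b]) simp
  qed
qed auto

lemma set_sub_walk_edges: "xs \<noteq> [] \<Longrightarrow> set xs \<subseteq> insert (hd xs) (\<Union>(set (walk_edges xs)))"
proof (induction xs rule: induct_list012)
  case (3 x y zs)
  have "set (y#zs) \<subseteq> insert y (\<Union>(set (walk_edges (y#zs))))" using 3(2) by simp
  moreover have "y \<in> {x,y}" by simp
  ultimately show ?case by auto
qed auto

lemma distinct_walk_edges: "distinct xs \<Longrightarrow> distinct (walk_edges xs)"
proof (induction xs rule: induct_list012)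
  case (3 x y zs)
  have "{x,y} \<notin> set (walk_edges (y#zs))"
  proof
    assume "{x,y} \<in> set (walk_edges (y#zs))"
    then obtain a b where ab: "{x,y} = {a,b}" "a \<in> set (y#zs)" "b \<in> set (y#zs)"
      using walk_edges_mem by blast
    have "x \<in> {x,y}" by simp
    then have "x \<in> {a,b}" by (simp only: ab(1))
    then have "x \<in> set (y#zs)" using ab by blast
    then show False using 3 by simp
  qed
  then show ?case using 3 by simp
qed auto

definition ml :: "'a set \<Rightarrow> 'a list \<Rightarrow> 'a set \<Rightarrow> 'a set list" where
  "ml e vs f = (if vs = [] then [e] else e # walk_edges vs @ [f])"

definition nx :: "'a \<Rightarrow> 'a list \<Rightarrow> 'a set \<Rightarrow> 'a set" where
  "nx v vs f = (case vs of [] \<Rightarrow> f | w # _ \<Rightarrow> {v, w})"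

lemma nx_simps[simp]: "nx v [] f = f" "nx v (w#ws) f = {v,w}"
  by (auto simp: nx_def)

lemma ml_Nil[simp]: "ml e [] f = [e]"
  by (simp add: ml_def)

lemma ml_Cons: "ml e (v#vs) f = e # ml (nx v vs f) vs f"
  by (cases vs) (auto simp: ml_def)


lemma saw_Nil: "saw E e [] f \<longleftrightarrow> e \<in> E \<and> f = e"
  by (auto simp: saw_def)

lemma saw_Cons: "saw E e (v#vs) f \<longleftrightarrow> e \<in> E \<and> v \<in> e \<and> v \<notin> set vs \<and> v \<in> nx v vs f \<and>
    e \<notin> set (ml (nx v vs f) vs f) \<and> saw E (nx v vs f) vs f"
proof (cases vs)
  case Nil
  then show ?thesis by (auto simp: saw_def)
next
  case (Cons w ws)
  then show ?thesis unfolding saw_def ml_def by (simp add: conj_ac)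
qed

lemma saw_ml_sub: "saw E e vs f \<Longrightarrow> set (ml e vs f) \<subseteq> E"
  by (cases "vs = []") (auto simp: saw_def ml_def)

lemma saw_distinct: "saw E e vs f \<Longrightarrow> distinct vs"
  by (simp add: saw_def)

lemma saw_ml_distinct: "saw E e vs f \<Longrightarrow> distinct (ml e vs f)"
  by (simp add: saw_def ml_def)

lemma saw_append:
  assumes "xs \<noteq> []" "ys \<noteq> []"
  shows "saw E e (xs @ ys) f \<longleftrightarrow> saw E e xs {last xs, hd ys} \<and> saw E {last xs, hd ys} ys f \<and>
     set xs \<inter> set ys = {} \<and> set (ml e xs {last xs, hd ys}) \<inter> set (ml {last xs, hd ys} ys f) = {{last xs, hd ys}}"
proof -
  let ?m = "{last xs, hd ys}"
  have m1: "last xs \<in> ?m" and m2: "hd ys \<in> ?m" by auto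
  have hd: "hd (xs @ ys) = hd xs" and la: "last (xs @ ys) = last ys" using assms by auto
  have we: "walk_edges (xs @ ys) = walk_edges xs @ ?m # walk_edges ys"
    using assms by (rule walk_edges_append)
  have d: "distinct (e # walk_edges (xs @ ys) @ [f]) \<longleftrightarrow>
     distinct (e # walk_edges xs @ [?m]) \<and> distinct (?m # walk_edges ys @ [f]) \<and>
     set (e # walk_edges xs @ [?m]) \<inter> set (?m # walk_edges ys @ [f]) = {?m}"
    unfolding we by auto
  show ?thesis
    unfolding saw_def ml_def using assms d
    by (simp only: hd la we distinct_append set_append) (auto simp: m1 m2)
qed

lemma ml_append_set:
  assumes "xs \<noteq> []" "ys \<noteq> []"
  shows "set (ml e (xs @ ys) f) = set (ml e xs {last xs, hd ys}) \<union> set (ml {last xs, hd ys} ys f)"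
  using assms by (auto simp: ml_def walk_edges_append)



lemma two_inc:
  "saw E e vs f \<Longrightarrow> u \<in> set vs \<Longrightarrow> u \<noteq> hd vs \<Longrightarrow>
   \<exists>a b. a \<in> set (ml e vs f) \<and> b \<in> set (ml e vs f) \<and> a \<noteq> b \<and> a \<noteq> e \<and> b \<noteq> e \<and> u \<in> a \<and> u \<in> b"
proof (induction vs arbitrary: e)
  case Nil then show ?case by simp
next
  case (Cons x xs)
  define e2 where "e2 = nx x xs f"
  have s: "e \<notin> set (ml e2 xs f)" "saw E e2 xs f"
    using Cons.prems(1) unfolding saw_Cons e2_def by auto
  have ux: "u \<noteq> x" "u \<in> set xs" using Cons.prems by auto
  then obtain y ys where xs: "xs = y # ys" by (cases xs) auto
  have mlc: "set (ml e (x#xs) f) = insert e (set (ml e2 xs f))"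
    by (simp add: ml_Cons e2_def)
  show ?case
  proof (cases "u = y")
    case True
    define b where "b = nx y ys f"
    have s2: "y \<in> b" "e2 \<notin> set (ml b ys f)"
      using s(2) unfolding xs saw_Cons b_def by auto
    have e2: "e2 = {x,y}" by (simp add: e2_def xs)
    have bm: "b \<in> set (ml b ys f)" by (cases ys) (auto simp: ml_def)
    have ml2: "set (ml e2 xs f) = insert e2 (set (ml b ys f))"
      by (simp add: xs ml_Cons b_def)
    show ?thesis
      apply (rule exI[of _ e2], rule exI[of _ b])
      using s(1) s2 bm ml2 mlc e2 True by auto
  next
    case False
    then have "u \<noteq> hd xs" using xs by simp
    from Cons.IH[OF s(2) ux(2) this] obtain a b where
      ab: "a \<in> set (ml e2 xs f)" "b \<in> set (ml e2 xs f)" "a \<noteq> b" "u \<in> a" "u \<in> b" by blast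
    show ?thesis
      apply (rule exI[of _ a], rule exI[of _ b])
      using ab s(1) mlc by auto
  qed
qed

lemma ml_hd_mem: "e \<in> set (ml e vs f)"
  by (simp add: ml_def)

lemma saw_f: "saw E e vs f \<Longrightarrow> f \<in> E" and saw_e: "saw E e vs f \<Longrightarrow> e \<in> E"
  by (auto simp: saw_def)

locale LT =
  fixes V :: "'v set" and E :: "'v set set" and K :: "'g set" and EH :: "'g set set"
    and w1 w2 w3 :: 'g and port :: "'v \<Rightarrow> 'v set \<Rightarrow> 'g"
  assumes sg: "simple_graph V E" and cub: "cubic V E" and gad: "gadget K EH w1 w2 w3"
    and pa: "port_assignment V E {w1, w2, w3} port"
begin

abbreviation "E1 \<equiv> lt_edges V E EH port"
abbreviation "lt \<equiv> lt_edge port"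
abbreviation "P \<equiv> {w1, w2, w3}"

lemma E_edge: "e \<in> E \<Longrightarrow> \<exists>u v. u \<in> V \<and> v \<in> V \<and> u \<noteq> v \<and> e = {u,v}"
  using sg by (auto simp: simple_graph_def)

lemma EH_edge: "h \<in> EH \<Longrightarrow> \<exists>a b. a \<in> K \<and> b \<in> K \<and> a \<noteq> b \<and> h = {a,b}"
  using gad by (auto simp: gadget_def simple_graph_def)

lemma P_sub_K: "P \<subseteq> K" using gad by (auto simp: gadget_def)

lemma in_E_V: "e \<in> E \<Longrightarrow> v \<in> e \<Longrightarrow> v \<in> V"
  using E_edge by blast

lemma port_bij: "e \<in> E \<Longrightarrow> v \<in> e \<Longrightarrow> bij_betw (port v) (incident_edges E v) P"
  using pa in_E_V by (auto simp: port_assignment_def)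

lemma port_in: "e \<in> E \<Longrightarrow> v \<in> e \<Longrightarrow> port v e \<in> P"
  using port_bij[of e v] by (auto simp: incident_edges_def dest: bij_betwE)

lemma port_inj: "e \<in> E \<Longrightarrow> e' \<in> E \<Longrightarrow> v \<in> e \<Longrightarrow> v \<in> e' \<Longrightarrow> port v e = port v e' \<Longrightarrow> e = e'"
  using port_bij[of e v] by (auto simp: incident_edges_def bij_betw_def dest: inj_onD)

lemma mem_lt: "p \<in> lt e \<longleftrightarrow> fst p \<in> e \<and> snd p = port (fst p) e"
  by (cases p) (auto simp: lt_edge_def)

lemma fst_lt: "fst ` lt e = e"
  by (simp add: lt_edge_def image_image)

lemma lt_inj: "lt e = lt e' \<Longrightarrow> e = e'"
  using fst_lt by metis

lemma lt_in_E1: "e \<in> E \<Longrightarrow> lt e \<in> E1"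
  by (auto simp: lt_edges_def)

lemma lt_pair: "lt {u,v} = {(u, port u {u,v}), (v, port v {u,v})}"
  by (simp add: lt_edge_def)

definition Int_edges :: "'v \<Rightarrow> ('v \<times> 'g) set set" where
  "Int_edges v = {F. \<exists>a b. F = {(v,a),(v,b)}}"

lemma Int_edgesI: "{(v,a),(v,b)} \<in> Int_edges v"
  by (auto simp: Int_edges_def)

lemma fst_Int: "F \<in> Int_edges v \<Longrightarrow> fst ` F = {v}"
  by (auto simp: Int_edges_def)

lemma lt_not_int: "e \<in> E \<Longrightarrow> lt e \<notin> Int_edges v"
proof
  assume "e \<in> E" "lt e \<in> Int_edges v"
  then have "e = {v}" using fst_Int fst_lt by metis
  with E_edge[OF \<open>e \<in> E\<close>] show False by (metis doubleton_eq_iff insert_absorb2 singleton_insert_inj_eq)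
qed

lemma Int_disj: assumes "u \<noteq> v" shows "Int_edges u \<inter> Int_edges v = {}"
proof -
  { fix F assume "F \<in> Int_edges u" "F \<in> Int_edges v"
    then have "{u} = {v}" using fst_Int by metis
    with assms have False by simp }
  then show ?thesis by blast
qed

lemma E1_cases: "F \<in> E1 \<Longrightarrow> (\<exists>v a b. v \<in> V \<and> {a,b} \<in> EH \<and> F = {(v,a),(v,b)}) \<or> (\<exists>e\<in>E. F = lt e)"
  unfolding lt_edges_def by blast

lemma int_in_E1: "{(v,a),(v,b)} \<in> E1 \<longleftrightarrow> v \<in> V \<and> {a,b} \<in> EH"
proof
  assume a: "{(v,a),(v,b)} \<in> E1"
  have "{(v,a),(v,b)} \<in> Int_edges v" by (rule Int_edgesI)
  then have "\<not> (\<exists>e\<in>E. {(v,a),(v,b)} = lt e)" using lt_not_int by metis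
  with E1_cases[OF a] obtain v' a' b' where h: "v' \<in> V" "{a',b'} \<in> EH" "{(v,a),(v,b)} = {(v',a'),(v',b')}"
    by blast
  have "snd ` {(v,a),(v,b)} = snd ` {(v',a'),(v',b')}" using h(3) by simp
  then have ab: "{a,b} = {a',b'}" by simp
  have "fst ` {(v,a),(v,b)} = fst ` {(v',a'),(v',b')}" using h(3) by simp
  then have "v = v'" by simp
  then show "v \<in> V \<and> {a,b} \<in> EH" using h ab by simp
next
  assume "v \<in> V \<and> {a,b} \<in> EH"
  then show "{(v,a),(v,b)} \<in> E1" unfolding lt_edges_def by blast
qed

lemma cross_in_E1:
  assumes "v \<noteq> w"
  shows "{(v,a),(w,b)} \<in> E1 \<longleftrightarrow> {v,w} \<in> E \<and> a = port v {v,w} \<and> b = port w {v,w}"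
proof
  assume a: "{(v,a),(w,b)} \<in> E1"
  have nint: "\<not> (\<exists>u a' b'. {(v,a),(w,b)} = {(u,a'),(u,b')})"
  proof
    assume "\<exists>u a' b'. {(v,a),(w,b)} = {(u,a'),(u,b')}"
    then obtain u a' b' where "{(v,a),(w,b)} = {(u,a'),(u,b')}" by blast
    then have "fst ` {(v,a),(w,b)} = fst ` {(u,a'),(u,b')}" by simp
    then have "{v,w} = {u}" by simp
    then show False using assms by (metis doubleton_eq_iff insert_absorb2 singleton_insert_inj_eq)
  qed
  with E1_cases[OF a] obtain e where e: "e \<in> E" "{(v,a),(w,b)} = lt e" by blast
  have "fst ` {(v,a),(w,b)} = fst ` lt e" using e(2) by simp
  then have ev: "e = {v,w}" using fst_lt by simp
  have "(v,a) \<in> lt e" "(w,b) \<in> lt e" using e(2) by auto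
  then show "{v,w} \<in> E \<and> a = port v {v,w} \<and> b = port w {v,w}"
    using e(1) ev by (auto simp: mem_lt)
next
  assume "{v,w} \<in> E \<and> a = port v {v,w} \<and> b = port w {v,w}"
  then show "{(v,a),(w,b)} \<in> E1" using lt_in_E1[of "{v,w}"] lt_pair[of v w] by simp
qed

lemma E1_sub: "F \<in> E1 \<Longrightarrow> F \<subseteq> V \<times> K"
proof -
  assume "F \<in> E1"
  from E1_cases[OF this] show ?thesis
  proof
    assume "\<exists>v a b. v \<in> V \<and> {a,b} \<in> EH \<and> F = {(v,a),(v,b)}"
    then obtain v a b where h: "v \<in> V" "{a,b} \<in> EH" "F = {(v,a),(v,b)}" by blast
    from EH_edge[OF h(2)] obtain a' b' where "a' \<in> K" "b' \<in> K" "{a,b} = {a',b'}" by blast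
    then have "a \<in> K" "b \<in> K" by (metis insertI1 insert_commute insert_iff singletonD)+
    then show ?thesis using h by auto
  next
    assume "\<exists>e\<in>E. F = lt e"
    then obtain e where e: "e \<in> E" "F = lt e" by blast
    show ?thesis
    proof
      fix p assume "p \<in> F"
      then have "fst p \<in> e" "snd p = port (fst p) e" using e mem_lt by auto
      then show "p \<in> V \<times> K" using e(1) in_E_V port_in P_sub_K by (cases p) force
    qed
  qed
qed

lemma saw_verts: "saw E1 F ws F' \<Longrightarrow> set ws \<subseteq> V \<times> K"
proof (cases "ws = []")
  case False
  assume s: "saw E1 F ws F'"
  then have "hd ws \<in> F" "F \<in> E1" "set (walk_edges ws) \<subseteq> E1" using False by (auto simp: saw_def)
  then have "insert (hd ws) (\<Union>(set (walk_edges ws))) \<subseteq> V \<times> K" using E1_sub by blast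
  then show ?thesis using set_sub_walk_edges[OF False] by blast
qed simp

definition gsaw :: "'g \<Rightarrow> 'g \<Rightarrow> 'g list set" where
  "gsaw p q = {ls. ls \<noteq> [] \<and> distinct ls \<and> set ls \<subseteq> K \<and> hd ls = p \<and> last ls = q \<and> set (walk_edges ls) \<subseteq> EH}"

lemma we_map_E1:
  assumes "v \<in> V"
  shows "set (walk_edges (map (Pair v) ls)) \<subseteq> E1 \<longleftrightarrow> set (walk_edges ls) \<subseteq> EH"
proof -
  have *: "Pair v ` h \<in> E1 \<longleftrightarrow> h \<in> EH" if hh: "h \<in> set (walk_edges ls)" for h
  proof -
    obtain a b where "h = {a,b}" using walk_edges_mem[OF hh] by blast
    then show ?thesis using int_in_E1[of v a b] assms by simp
  qed
  show ?thesis unfolding walk_edges_map using * by auto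
qed

lemma we_map_Int: "set (walk_edges (map (Pair v) ls)) \<subseteq> Int_edges v"
proof
  fix F assume "F \<in> set (walk_edges (map (Pair v) ls))"
  then obtain h where h: "h \<in> set (walk_edges ls)" "F = Pair v ` h" by (auto simp: walk_edges_map)
  obtain a b where "h = {a,b}" using walk_edges_mem[OF h(1)] by blast
  then show "F \<in> Int_edges v" using h(2) Int_edgesI by simp
qed

lemma ml_block_sub: "set (ml (lt e) (map (Pair v) ls) (lt f)) \<subseteq> {lt e, lt f} \<union> Int_edges v"
  using we_map_Int[of v ls] by (auto simp: ml_def)

lemma block_saw:
  assumes "e \<in> E" "f \<in> E" "ls \<noteq> []"
  shows "saw E1 (lt e) (map (Pair v) ls) (lt f) \<longleftrightarrow>
     ls \<in> gsaw (port v e) (port v f) \<and> v \<in> e \<and> v \<in> f \<and> e \<noteq> f"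
proof
  assume s: "saw E1 (lt e) (map (Pair v) ls) (lt f)"
  have h: "hd (map (Pair v) ls) \<in> lt e" "last (map (Pair v) ls) \<in> lt f"
    "distinct (map (Pair v) ls)" "set (walk_edges (map (Pair v) ls)) \<subseteq> E1"
    "distinct (lt e # walk_edges (map (Pair v) ls) @ [lt f])"
    using s assms(3) by (auto simp: saw_def)
  have ve: "v \<in> e" "hd ls = port v e" using h(1) assms(3) by (auto simp: mem_lt hd_map)
  have vf: "v \<in> f" "last ls = port v f" using h(2) assms(3) by (auto simp: mem_lt last_map)
  have vV: "v \<in> V" using ve assms in_E_V by blast
  have "set (walk_edges ls) \<subseteq> EH" using h(4) we_map_E1[OF vV] by simp
  moreover have "set ls \<subseteq> K" using saw_verts[OF s] by auto
  moreover have "distinct ls" using h(3) by (simp add: distinct_map inj_on_def)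
  moreover have "e \<noteq> f" using h(5) by auto
  ultimately show "ls \<in> gsaw (port v e) (port v f) \<and> v \<in> e \<and> v \<in> f \<and> e \<noteq> f"
    using ve vf assms(3) by (simp add: gsaw_def)
next
  assume a: "ls \<in> gsaw (port v e) (port v f) \<and> v \<in> e \<and> v \<in> f \<and> e \<noteq> f"
  have vV: "v \<in> V" using a assms in_E_V by blast
  have g: "ls \<noteq> []" "distinct ls" "hd ls = port v e" "last ls = port v f" "set (walk_edges ls) \<subseteq> EH"
    using a by (auto simp: gsaw_def)
  have "set (walk_edges (map (Pair v) ls)) \<subseteq> E1" using g(5) we_map_E1[OF vV] by simp
  moreover have "distinct (walk_edges (map (Pair v) ls))"
    using g(2) by (intro distinct_walk_edges) (simp add: distinct_map inj_on_def)
  moreover have "lt e \<notin> set (walk_edges (map (Pair v) ls))" "lt f \<notin> set (walk_edges (map (Pair v) ls))"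
    using we_map_Int[of v ls] lt_not_int assms by blast+
  moreover have "lt e \<noteq> lt f" using a lt_inj by blast
  moreover have "hd (map (Pair v) ls) \<in> lt e" "last (map (Pair v) ls) \<in> lt f"
    using g a by (auto simp: mem_lt hd_map last_map)
  ultimately show "saw E1 (lt e) (map (Pair v) ls) (lt f)"
    using g assms lt_in_E1 by (auto simp: saw_def distinct_map inj_on_def)
qed

fun fl :: "'v list \<Rightarrow> 'g list list \<Rightarrow> ('v \<times> 'g) list" where
  "fl (v#vs) (l#ls) = map (Pair v) l @ fl vs ls"
| "fl _ _ = []"

lemma fst_fl: "fst ` set (fl vs lss) \<subseteq> set vs"
  by (induction vs lss rule: fl.induct) auto

lemma fl_Nil[simp]: "fl [] lss = []"
  by (cases lss) auto

lemma hd_fl: "l \<noteq> [] \<Longrightarrow> fl (v#vs) (l#lss) \<noteq> [] \<and> hd (fl (v#vs) (l#lss)) = (v, hd l)"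
  by (cases l) auto

fun gp :: "'v set \<Rightarrow> 'v list \<Rightarrow> 'v set \<Rightarrow> 'g list set list" where
  "gp e [] f = []"
| "gp e (v#vs) f = gsaw (port v e) (port v (nx v vs f)) # gp (nx v vs f) vs f"

lemma listset_Cons_iff: "lss \<in> listset (A # As) \<longleftrightarrow> (\<exists>l lss'. lss = l # lss' \<and> l \<in> A \<and> lss' \<in> listset As)"
  by (auto simp: set_Cons_def)

lemma listset_gp: "lss \<in> listset (gp e vs f) \<Longrightarrow> length lss = length vs \<and> (\<forall>l\<in>set lss. l \<noteq> [])"
proof (induction vs arbitrary: e lss)
  case (Cons v vs)
  from Cons.prems obtain l lss' where l: "lss = l # lss'" "l \<in> gsaw (port v e) (port v (nx v vs f))"
    "lss' \<in> listset (gp (nx v vs f) vs f)"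
    unfolding gp.simps listset_Cons_iff by blast
  from Cons.IH[OF l(3)] l(1,2) show ?case by (auto simp: gsaw_def)
qed simp

end


context LT begin

lemma construct:
  "saw E e vs f \<Longrightarrow> lss \<in> listset (gp e vs f) \<Longrightarrow>
    saw E1 (lt e) (fl vs lss) (lt f) \<and>
    set (ml (lt e) (fl vs lss) (lt f)) \<subseteq> lt ` set (ml e vs f) \<union> (\<Union>v\<in>set vs. Int_edges v) \<and>
    lt ` set (ml e vs f) \<subseteq> set (ml (lt e) (fl vs lss) (lt f))"
proof (induction vs arbitrary: e lss)
  case Nil
  then have "e \<in> E" "f = e" "lss = []" by (auto simp: saw_Nil)
  then show ?case using lt_in_E1 by (simp add: saw_Nil)
next
  case (Cons v vs)
  define e' where "e' = nx v vs f"
  from Cons.prems(2) obtain ls lss' where l: "lss = ls # lss'" "ls \<in> gsaw (port v e) (port v e')"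
    "lss' \<in> listset (gp e' vs f)"
    unfolding gp.simps listset_Cons_iff e'_def by blast
  have s: "e \<in> E" "v \<in> e" "v \<notin> set vs" "v \<in> e'" "e \<notin> set (ml e' vs f)" "saw E e' vs f"
    using Cons.prems(1) unfolding saw_Cons e'_def by auto
  have e'E: "e' \<in> E" using saw_e[OF s(6)] .
  have fE: "f \<in> E" using saw_f[OF s(6)] .
  have nee: "e \<noteq> e'" using s(5) ml_hd_mem by metis
  have lsne: "ls \<noteq> []" using l(2) by (simp add: gsaw_def)
  define A where "A = map (Pair v) ls"
  have Ane: "A \<noteq> []" using lsne by (simp add: A_def)
  have sA: "saw E1 (lt e) A (lt e')"
    unfolding A_def using block_saw[OF s(1) e'E lsne] l(2) s nee by blast
  have IH: "saw E1 (lt e') (fl vs lss') (lt f)"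
    "set (ml (lt e') (fl vs lss') (lt f)) \<subseteq> lt ` set (ml e' vs f) \<union> (\<Union>v\<in>set vs. Int_edges v)"
    "lt ` set (ml e' vs f) \<subseteq> set (ml (lt e') (fl vs lss') (lt f))"
    using Cons.IH[OF s(6) l(3)] by auto
  have flc: "fl (v#vs) lss = A @ fl vs lss'" by (simp add: l(1) A_def)
  have mlc: "set (ml e (v#vs) f) = insert e (set (ml e' vs f))" by (simp add: ml_Cons e'_def)
  show ?case
  proof (cases vs)
    case Nil
    then have "lss' = []" "e' = f" using l(3) by (auto simp: e'_def)
    then have fl1: "fl (v#vs) lss = A" using flc Nil by simp
    have "set (ml (lt e) A (lt f)) \<subseteq> {lt e, lt f} \<union> Int_edges v"
      unfolding A_def by (rule ml_block_sub)
    moreover have "set (ml (lt e) A (lt f)) \<supseteq> {lt e, lt f}" using Ane by (auto simp: ml_def)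
    moreover have "set (ml e (v#vs) f) = {e, f}" using Nil by (simp add: ml_def)
    ultimately show ?thesis using sA \<open>e' = f\<close> fl1 Nil by auto
  next
    case (Cons w ws)
    then have e'w: "e' = {v,w}" by (simp add: e'_def)
    from l(3) obtain l' lss'' where l': "lss' = l' # lss''" "l' \<in> gsaw (port w e') (port w (nx w ws f))"
      unfolding Cons gp.simps listset_Cons_iff by blast
    have l'ne: "l' \<noteq> []" and hdl': "hd l' = port w e'" using l'(2) by (auto simp: gsaw_def)
    define B where "B = fl vs lss'"
    have Bne: "B \<noteq> []" and hdB: "hd B = (w, port w e')"
      using hd_fl[OF l'ne] hdl' by (auto simp: B_def Cons l'(1))
    have lastA: "last A = (v, port v e')" using lsne l(2) by (auto simp: A_def last_map gsaw_def)
    have m: "{last A, hd B} = lt e'" using lastA hdB e'w lt_pair by simp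
    have dis1: "set A \<inter> set B = {}"
    proof -
      have "fst ` set A \<subseteq> {v}" by (auto simp: A_def)
      moreover have "fst ` set B \<subseteq> set vs" using fst_fl by (simp add: B_def)
      ultimately show ?thesis using s(3) by fastforce
    qed
    have sub1: "set (ml (lt e) A (lt e')) \<subseteq> {lt e, lt e'} \<union> Int_edges v"
      unfolding A_def by (rule ml_block_sub)
    have e'm1: "lt e' \<in> set (ml (lt e) A (lt e'))" using Ane by (simp add: ml_def)
    have e'm2: "lt e' \<in> set (ml (lt e') B (lt f))" by (rule ml_hd_mem)
    have mlE: "set (ml e' vs f) \<subseteq> E" using saw_ml_sub[OF s(6)] .
    have dis2: "set (ml (lt e) A (lt e')) \<inter> set (ml (lt e') B (lt f)) = {lt e'}"
    proof (rule equalityI)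
      show "{lt e'} \<subseteq> set (ml (lt e) A (lt e')) \<inter> set (ml (lt e') B (lt f))" using e'm1 e'm2 by simp
      show "set (ml (lt e) A (lt e')) \<inter> set (ml (lt e') B (lt f)) \<subseteq> {lt e'}"
      proof
        fix x assume x: "x \<in> set (ml (lt e) A (lt e')) \<inter> set (ml (lt e') B (lt f))"
        then have x2: "x \<in> lt ` set (ml e' vs f) \<union> (\<Union>u\<in>set vs. Int_edges u)"
          using IH(2) by (auto simp: B_def)
        have x1: "x \<in> {lt e, lt e'} \<union> Int_edges v" using x sub1 by blast
        show "x \<in> {lt e'}"
        proof (rule ccontr)
          assume nx': "x \<notin> {lt e'}"
          show False
          proof (cases "x = lt e")
            case True
            show False
            proof (cases "x \<in> lt ` set (ml e' vs f)")
              case True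
              then obtain e2 where "e2 \<in> set (ml e' vs f)" "lt e = lt e2" using \<open>x = lt e\<close> by auto
              then show False using lt_inj s(5) by metis
            next
              case False
              then obtain u where "u \<in> set vs" "x \<in> Int_edges u" using x2 by auto
              then show False using lt_not_int s(1) \<open>x = lt e\<close> by metis
            qed
          next
            case False
            then have xv: "x \<in> Int_edges v" using x1 nx' by auto
            show False
            proof (cases "x \<in> lt ` set (ml e' vs f)")
              case True
              then obtain e2 where "e2 \<in> set (ml e' vs f)" "x = lt e2" by auto
              then show False using lt_not_int mlE xv by blast
            next
              case False
              then obtain u where "u \<in> set vs" "x \<in> Int_edges u" using x2 by auto
              then show False using Int_disj[of u v] s(3) xv by blast
            qed
          qed
        qed
      qed
    qed
    have sAB: "saw E1 (lt e) (A @ B) (lt f)"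
      using saw_append[OF Ane Bne] m sA IH(1) dis1 dis2 by (simp add: B_def)
    have mlAB: "set (ml (lt e) (A @ B) (lt f)) = set (ml (lt e) A (lt e')) \<union> set (ml (lt e') B (lt f))"
      using ml_append_set[OF Ane Bne] m by simp
    have e'in: "lt e' \<in> lt ` set (ml e' vs f)" using ml_hd_mem by blast
    show ?thesis
    proof (intro conjI)
      show "saw E1 (lt e) (fl (v # vs) lss) (lt f)" using sAB flc by (simp add: B_def)
      show "set (ml (lt e) (fl (v # vs) lss) (lt f)) \<subseteq> lt ` set (ml e (v # vs) f) \<union> (\<Union>v\<in>set (v # vs). Int_edges v)"
        using flc mlAB sub1 IH(2) mlc e'in by (auto simp: B_def)
      show "lt ` set (ml e (v # vs) f) \<subseteq> set (ml (lt e) (fl (v # vs) lss) (lt f))"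
        using flc mlAB IH(3) mlc ml_hd_mem[of "lt e" A "lt e'"] by (auto simp: B_def)
    qed
  qed
qed

end


context LT begin

lemma four_inc:
  assumes "v \<in> V" "a \<in> E" "b \<in> E" "c \<in> E" "d \<in> E" "v \<in> a" "v \<in> b" "v \<in> c" "v \<in> d"
    "distinct [a,b,c,d]"
  shows False
proof -
  have c3: "card (incident_edges E v) = 3" using cub assms(1) by (simp add: cubic_def)
  then have fin: "finite (incident_edges E v)" by (metis card.infinite zero_neq_numeral)
  have sub: "{a,b,c,d} \<subseteq> incident_edges E v" using assms by (auto simp: incident_edges_def)
  have "card {a,b,c,d} = 4" using assms(10) by simp
  moreover have "card {a,b,c,d} \<le> 3" using card_mono[OF fin sub] c3 by simp
  ultimately show False by simp
qed

lemma map_Pair_snd: "\<forall>q\<in>set A. fst q = v \<Longrightarrow> map (Pair v) (map snd A) = A"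
  by (induction A) auto

lemma decompose:
  "saw E1 (lt e) ws (lt f) \<Longrightarrow> e \<in> E \<Longrightarrow> f \<in> E \<Longrightarrow>
    \<exists>vs lss. ws = fl vs lss \<and> saw E e vs f \<and> lss \<in> listset (gp e vs f)"
proof (induction "length ws" arbitrary: ws e rule: less_induct)
  case less
  show ?case
  proof (cases ws)
    case Nil
    then have "lt e = lt f" using less.prems(1) by (simp add: saw_Nil)
    then have "e = f" by (rule lt_inj)
    then show ?thesis using Nil less.prems by (intro exI[of _ "[]"]) (auto simp: saw_Nil)
  next
    case (Cons p ws')
    obtain v a where p: "p = (v,a)" by (cases p)
    define A where "A = takeWhile (\<lambda>q. fst q = v) ws"
    define B where "B = dropWhile (\<lambda>q. fst q = v) ws"
    have wsAB: "ws = A @ B" by (simp add: A_def B_def)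
    have Ane: "A \<noteq> []" by (simp add: A_def Cons p)
    have Afst: "\<forall>q\<in>set A. fst q = v" unfolding A_def by (blast dest: set_takeWhileD)
    define ls where "ls = map snd A"
    have Als: "A = map (Pair v) ls" unfolding ls_def using map_Pair_snd[OF Afst] by simp
    have lsne: "ls \<noteq> []" using Ane by (simp add: ls_def)
    show ?thesis
    proof (cases "B = []")
      case True
      then have "ws = map (Pair v) ls" using wsAB Als by simp
      then have "ls \<in> gsaw (port v e) (port v f) \<and> v \<in> e \<and> v \<in> f \<and> e \<noteq> f"
        using block_saw[OF less.prems(2,3) lsne] less.prems(1) by simp
      then have h: "ls \<in> gsaw (port v e) (port v f)" "v \<in> e" "v \<in> f" "e \<noteq> f" by auto
      have "saw E e [v] f" using h less.prems(2,3) by (simp add: saw_Cons saw_Nil)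
      moreover have "[ls] \<in> listset (gp e [v] f)" using h(1) by (simp add: set_Cons_def)
      moreover have "ws = fl [v] [ls]" using \<open>ws = map (Pair v) ls\<close> by simp
      ultimately show ?thesis by blast
    next
      case False
      obtain w b where hdB: "hd B = (w,b)" by (cases "hd B")
      have wv: "w \<noteq> v" using hd_dropWhile[OF False[unfolded B_def]] hdB by (simp add: B_def)
      have "saw E1 (lt e) (A @ B) (lt f)" using less.prems(1) wsAB by simp
      from saw_append[OF Ane False, THEN iffD1, OF this]
      have sp: "saw E1 (lt e) A {last A, hd B}" "saw E1 {last A, hd B} B (lt f)"
        "set A \<inter> set B = {}" "set (ml (lt e) A {last A, hd B}) \<inter> set (ml {last A, hd B} B (lt f)) = {{last A, hd B}}"
        by blast+
      have lastA: "last A = (v, last ls)" using lsne by (simp add: Als last_map)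
      have "{last A, hd B} \<in> E1" using saw_e[OF sp(2)] .
      then have "{(v, last ls), (w, b)} \<in> E1" using lastA hdB by simp
      moreover have "v \<noteq> w" using wv by simp
      ultimately have cr: "{v,w} \<in> E" "last ls = port v {v,w}" "b = port w {v,w}"
        using cross_in_E1 by blast+
      define e' where "e' = {v,w}"
      have m: "{last A, hd B} = lt e'" using lastA hdB cr lt_pair[of v w] by (simp add: e'_def)
      have e'E: "e' \<in> E" using cr by (simp add: e'_def)
      have "saw E1 (lt e) (map (Pair v) ls) (lt e')" using sp(1) m Als by simp
      then have hA: "ls \<in> gsaw (port v e) (port v e')" "v \<in> e" "e \<noteq> e'"
        using block_saw[OF less.prems(2) e'E lsne] by auto
      have len: "length B < length ws" using wsAB Ane by simp
      have sB: "saw E1 (lt e') B (lt f)" using sp(2) m by simp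
      have "\<exists>vs lss. B = fl vs lss \<and> saw E e' vs f \<and> lss \<in> listset (gp e' vs f)"
        by (rule less.hyps[OF len sB e'E less.prems(3)])
      then obtain vs' lss' where IH: "B = fl vs' lss'" "saw E e' vs' f" "lss' \<in> listset (gp e' vs' f)"
        by blast
      have lg: "length lss' = length vs'" "\<forall>l\<in>set lss'. l \<noteq> []" using listset_gp[OF IH(3)] by auto
      obtain w' vs'' where vs': "vs' = w' # vs''" using IH(1) False by (cases vs') auto
      obtain l' lss'' where lss': "lss' = l' # lss''" using lg(1) vs' by (cases lss') auto
      have "hd B = (w', hd l')" using hd_fl[of l' w' vs'' lss''] lg(2) IH(1) vs' lss' by simp
      then have ww: "w' = w" using hdB by simp
      have nxe: "nx v vs' f = e'" by (simp add: vs' ww e'_def)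
      have cB: "lt ` set (ml e' vs' f) \<subseteq> set (ml (lt e') B (lt f))"
        using construct[OF IH(2) IH(3)] IH(1) by simp
      have enot: "e \<notin> set (ml e' vs' f)"
      proof
        assume "e \<in> set (ml e' vs' f)"
        then have "lt e \<in> set (ml (lt e') B (lt f))" using cB by blast
        moreover have "lt e \<in> set (ml (lt e) A (lt e'))" by (rule ml_hd_mem)
        ultimately have "lt e \<in> set (ml (lt e) A (lt e')) \<inter> set (ml (lt e') B (lt f))" by blast
        then have "lt e \<in> {lt e'}" using sp(4) unfolding m by simp
        then have "lt e = lt e'" by simp
        then show False using hA(3) lt_inj by blast
      qed
      have vnot: "v \<notin> set vs'"
      proof
        assume vin: "v \<in> set vs'"
        have "v \<noteq> hd vs'" using vs' ww wv by simp
        from two_inc[OF IH(2) vin this] obtain a1 b1 where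
          ab: "a1 \<in> set (ml e' vs' f)" "b1 \<in> set (ml e' vs' f)" "a1 \<noteq> b1" "a1 \<noteq> e'" "b1 \<noteq> e'" "v \<in> a1" "v \<in> b1"
          by blast
        have "a1 \<in> E" "b1 \<in> E" using ab saw_ml_sub[OF IH(2)] by auto
        moreover have "v \<in> V" using hA(2) less.prems(2) in_E_V by blast
        moreover have "distinct [e, e', a1, b1]" using ab enot hA(3) by auto
        moreover have "v \<in> e'" by (simp add: e'_def)
        ultimately show False
          using four_inc[of v e e' a1 b1] less.prems(2) e'E hA(2) ab(6,7) by blast
      qed
      have "v \<in> e'" by (simp add: e'_def)
      then have "saw E e (v # vs') f"
        unfolding saw_Cons nxe using less.prems(2) hA(2) vnot enot IH(2) by blast
      moreover have "ls # lss' \<in> listset (gp e (v # vs') f)"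
        unfolding gp.simps nxe listset_Cons_iff using hA(1) IH(3) by blast
      moreover have "ws = fl (v # vs') (ls # lss')" using wsAB Als IH(1) by simp
      ultimately show ?thesis by blast
    qed
  qed
qed

lemma tw_fl: "v \<notin> fst ` set R \<Longrightarrow> takeWhile (\<lambda>q. fst q = v) (map (Pair v) l @ R) = map (Pair v) l"
proof (induction l)
  case Nil then show ?case by (cases R) auto
qed simp

lemma dw_fl: "v \<notin> fst ` set R \<Longrightarrow> dropWhile (\<lambda>q. fst q = v) (map (Pair v) l @ R) = R"
proof (induction l)
  case Nil then show ?case by (cases R) auto
qed simp

lemma fl_inj:
  "distinct vs \<Longrightarrow> length lss = length vs \<Longrightarrow> length lss' = length vs' \<Longrightarrow>
   \<forall>l\<in>set lss. l \<noteq> [] \<Longrightarrow> \<forall>l\<in>set lss'. l \<noteq> [] \<Longrightarrow> distinct vs' \<Longrightarrow>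
   fl vs lss = fl vs' lss' \<Longrightarrow> vs = vs' \<and> lss = lss'"
proof (induction vs arbitrary: lss vs' lss')
  case Nil
  then have "lss = []" by simp
  show ?case
  proof (cases vs')
    case (Cons w ws)
    then obtain l' lss'' where "lss' = l' # lss''" using Nil by (cases lss') auto
    then have "fl vs' lss' \<noteq> []" using hd_fl[of l' w ws lss''] Nil Cons by simp
    then show ?thesis using Nil by simp
  qed (use Nil \<open>lss = []\<close> in simp)
next
  case (Cons v vs)
  obtain l lss0 where lss: "lss = l # lss0" using Cons.prems(2) by (cases lss) auto
  have lne: "l \<noteq> []" using Cons.prems(4) lss by simp
  have ne: "fl (v#vs) lss \<noteq> []" using hd_fl[OF lne] lss by simp
  obtain w vs0 where vs': "vs' = w # vs0" using ne Cons.prems(7) by (cases vs') auto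
  obtain l' lss0' where lss': "lss' = l' # lss0'" using Cons.prems(3) vs' by (cases lss') auto
  have lne': "l' \<noteq> []" using Cons.prems(5) lss' by simp
  have "hd (fl (v#vs) lss) = hd (fl vs' lss')" using Cons.prems(7) by simp
  then have vw: "v = w" using hd_fl[OF lne] hd_fl[OF lne'] lss lss' vs' by simp
  have n1: "v \<notin> fst ` set (fl vs lss0)" using fst_fl Cons.prems(1) by fastforce
  have n2: "v \<notin> fst ` set (fl vs0 lss0')" using fst_fl Cons.prems(6) vs' vw by fastforce
  have eq: "map (Pair v) l @ fl vs lss0 = map (Pair v) l' @ fl vs0 lss0'"
    using Cons.prems(7) lss lss' vs' vw by simp
  have "map (Pair v) l = map (Pair v) l'"
    using tw_fl[OF n1, of l] tw_fl[OF n2, of l'] eq by metis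
  then have ll: "l = l'" by (simp add: inj_on_def)
  have "fl vs lss0 = fl vs0 lss0'" using dw_fl[OF n1, of l] dw_fl[OF n2, of l'] eq by metis
  from Cons.IH[OF _ _ _ _ _ _ this] Cons.prems lss lss' vs' have "vs = vs0 \<and> lss0 = lss0'" by auto
  then show ?case using vw ll lss lss' vs' by simp
qed

end


lemma fin_le_infsum_enn: "finite F \<Longrightarrow> F \<subseteq> A \<Longrightarrow> sum f F \<le> infsum (f::'a \<Rightarrow> ennreal) A"
  unfolding nonneg_infsum_complete[of A f, OF zero_le]
  by (rule SUP_upper) simp

lemma infsum_le_enn: "(\<And>F. finite F \<Longrightarrow> F \<subseteq> A \<Longrightarrow> sum f F \<le> c) \<Longrightarrow> infsum (f::'a \<Rightarrow> ennreal) A \<le> c"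
  unfolding nonneg_infsum_complete[of A f, OF zero_le]
  by (rule SUP_least) simp

lemma infsum_Sigma_fin_enn:
  fixes f :: "'a \<times> 'b \<Rightarrow> ennreal"
  assumes fin: "\<And>a. a \<in> A \<Longrightarrow> finite (B a)"
  shows "infsum f (Sigma A B) = infsum (\<lambda>a. \<Sum>b\<in>B a. f (a,b)) A"
proof (rule antisym)
  show "infsum f (Sigma A B) \<le> infsum (\<lambda>a. \<Sum>b\<in>B a. f (a,b)) A"
  proof (rule infsum_le_enn)
    fix F assume F: "finite F" "F \<subseteq> Sigma A B"
    have fa: "finite (fst ` F)" "fst ` F \<subseteq> A" using F by auto
    have fs: "finite (Sigma (fst ` F) B)" using fa fin by (intro finite_SigmaI) auto
    have "F \<subseteq> Sigma (fst ` F) B" using F by force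
    then have "sum f F \<le> sum f (Sigma (fst ` F) B)" using fs by (intro sum_mono2) auto
    also have "\<dots> = (\<Sum>a\<in>fst ` F. \<Sum>b\<in>B a. f (a,b))"
      using fa fin by (subst sum.Sigma) (auto simp: case_prod_beta')
    also have "\<dots> \<le> infsum (\<lambda>a. \<Sum>b\<in>B a. f (a,b)) A" using fa by (rule fin_le_infsum_enn)
    finally show "sum f F \<le> infsum (\<lambda>a. \<Sum>b\<in>B a. f (a,b)) A" .
  qed
  show "infsum (\<lambda>a. \<Sum>b\<in>B a. f (a,b)) A \<le> infsum f (Sigma A B)"
  proof (rule infsum_le_enn)
    fix G assume G: "finite G" "G \<subseteq> A"
    have "(\<Sum>a\<in>G. \<Sum>b\<in>B a. f (a,b)) = sum f (Sigma G B)"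
      using G fin by (subst sum.Sigma) (auto simp: case_prod_beta')
    also have "\<dots> \<le> infsum f (Sigma A B)" using G fin by (intro fin_le_infsum_enn) auto
    finally show "(\<Sum>a\<in>G. \<Sum>b\<in>B a. f (a,b)) \<le> infsum f (Sigma A B)" .
  qed
qed

lemma set_Cons_eq: "set_Cons A L = (\<lambda>(a,l). a#l) ` (A \<times> L)"
  by (auto simp: set_Cons_def)

lemma finite_listset: "\<forall>A\<in>set As. finite A \<Longrightarrow> finite (listset As)"
  by (induction As) (auto simp: set_Cons_eq)

lemma sum_listset:
  fixes h :: "'a list \<Rightarrow> 'b::comm_semiring_1"
  shows "\<forall>A\<in>set As. finite A \<Longrightarrow>
    (\<Sum>lss\<in>listset As. prod_list (map h lss)) = prod_list (map (\<lambda>A. \<Sum>l\<in>A. h l) As)"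
proof (induction As)
  case (Cons A As)
  have inj: "inj_on (\<lambda>(a,l). a#l) (A \<times> listset As)" by (auto simp: inj_on_def)
  have "(\<Sum>lss\<in>listset (A#As). prod_list (map h lss)) =
        (\<Sum>(a,l)\<in>A \<times> listset As. h a * prod_list (map h l))"
    unfolding listset.simps set_Cons_eq by (subst sum.reindex[OF inj]) (auto intro!: sum.cong)
  also have "\<dots> = (\<Sum>a\<in>A. \<Sum>l\<in>listset As. h a * prod_list (map h l))"
    by (simp add: sum.cartesian_product)
  also have "\<dots> = (\<Sum>a\<in>A. h a) * (\<Sum>l\<in>listset As. prod_list (map h l))"
    by (simp add: sum_product)
  finally show ?case using Cons by simp
qed simp

lemma pow_sum_list: "(c::'a::monoid_mult) ^ sum_list (map length lss) = prod_list (map (\<lambda>l. c ^ length l) lss)"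
  by (induction lss) (auto simp: power_add)

lemma prod_list_const: "(\<forall>A\<in>set As. h A = c) \<Longrightarrow> prod_list (map h As) = (c::'a::monoid_mult) ^ length As"
  by (induction As) auto

context LT begin

lemma length_fl: "length lss = length vs \<Longrightarrow> length (fl vs lss) = sum_list (map length lss)"
  by (induction vs lss rule: fl.induct) auto

lemma finite_K: "finite K" using gad by (simp add: gadget_def)

lemma finite_gsaw: "finite (gsaw p q)"
  by (rule finite_subset[OF _ finite_subset_distinct[OF finite_K]]) (auto simp: gsaw_def)

definition gc :: "'g \<Rightarrow> 'g \<Rightarrow> real \<Rightarrow> real" where
  "gc p q x = (\<Sum>l\<in>gsaw p q. x ^ length l)"

lemma gc_nonneg: "0 \<le> x \<Longrightarrow> 0 \<le> gc p q x"
  by (simp add: gc_def sum_nonneg)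

lemma gsaw_rev: "l \<in> gsaw p q \<Longrightarrow> rev l \<in> gsaw q p"
  by (simp add: gsaw_def walk_edges_rev hd_rev last_rev)

lemma gc_rev_le: assumes "0 \<le> x" shows "gc p q x \<le> gc q p x"
proof -
  have "gc p q x = (\<Sum>l\<in>rev ` gsaw p q. x ^ length l)"
    unfolding gc_def by (subst sum.reindex) (auto simp: inj_on_def)
  also have "\<dots> \<le> gc q p x" unfolding gc_def
    using assms gsaw_rev finite_gsaw by (intro sum_mono2) auto
  finally show ?thesis .
qed

lemma gsaw_aut:
  assumes aut: "graph_automorphism K EH \<gamma>" and l: "l \<in> gsaw p q"
  shows "map \<gamma> l \<in> gsaw (\<gamma> p) (\<gamma> q)"
proof -
  have bij: "bij_betw \<gamma> K K" using aut by (simp add: graph_automorphism_def)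
  have adj: "\<And>u w. u \<in> K \<Longrightarrow> w \<in> K \<Longrightarrow> {u,w} \<in> EH \<longleftrightarrow> {\<gamma> u, \<gamma> w} \<in> EH"
    using aut by (simp add: graph_automorphism_def)
  have g: "l \<noteq> []" "distinct l" "set l \<subseteq> K" "hd l = p" "last l = q" "set (walk_edges l) \<subseteq> EH"
    using l by (auto simp: gsaw_def)
  have inj: "inj_on \<gamma> (set l)" using bij g(3) by (meson bij_betw_imp_inj_on inj_on_subset)
  have "set (map \<gamma> l) \<subseteq> K" using bij g(3) by (auto simp: bij_betw_def)
  moreover have "distinct (map \<gamma> l)" using g(2) inj by (simp add: distinct_map)
  moreover have "set (walk_edges (map \<gamma> l)) \<subseteq> EH"
  proof
    fix F assume "F \<in> set (walk_edges (map \<gamma> l))"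
    then obtain h where h: "h \<in> set (walk_edges l)" "F = \<gamma> ` h" by (auto simp: walk_edges_map)
    obtain a b where ab: "h = {a,b}" "a \<in> set l" "b \<in> set l" using walk_edges_mem[OF h(1)] by blast
    have "{a,b} \<in> EH" using h(1) g(6) ab(1) by auto
    then have "{\<gamma> a, \<gamma> b} \<in> EH" using adj ab g(3) by blast
    then show "F \<in> EH" using h(2) ab(1) by simp
  qed
  ultimately show ?thesis using g by (simp add: gsaw_def hd_map last_map)
qed

lemma gc_aut_le:
  assumes aut: "graph_automorphism K EH \<gamma>" and x: "0 \<le> x"
  shows "gc p q x \<le> gc (\<gamma> p) (\<gamma> q) x"
proof -
  have bij: "bij_betw \<gamma> K K" using aut by (simp add: graph_automorphism_def)
  have inj: "inj_on (map \<gamma>) (gsaw p q)"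
  proof
    fix l l' assume "l \<in> gsaw p q" "l' \<in> gsaw p q" "map \<gamma> l = map \<gamma> l'"
    moreover have "inj_on \<gamma> K" using bij by (simp add: bij_betw_def)
    ultimately show "l = l'"
      by (intro map_inj_on[of \<gamma> l l']) (auto simp: gsaw_def intro: inj_on_subset)
  qed
  have "gc p q x = (\<Sum>l\<in>map \<gamma> ` gsaw p q. x ^ length l)"
    unfolding gc_def by (subst sum.reindex[OF inj]) simp
  also have "\<dots> \<le> gc (\<gamma> p) (\<gamma> q) x" unfolding gc_def
    using x gsaw_aut[OF aut] finite_gsaw by (intro sum_mono2) auto
  finally show ?thesis .
qed

end

lemma three_eq:
  fixes N :: "'g \<Rightarrow> 'g \<Rightarrow> real"
  assumes dist: "a \<noteq> b" "a \<noteq> c" "b \<noteq> c"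
    and sym: "\<And>p q. N p q \<le> N q p"
    and tr: "\<And>p q. p \<in> {a,b,c} \<Longrightarrow> q \<in> {a,b,c} \<Longrightarrow>
       \<exists>\<gamma>. \<gamma> p = q \<and> \<gamma> ` {a,b,c} = {a,b,c} \<and> inj_on \<gamma> {a,b,c} \<and> (\<forall>u v. N u v \<le> N (\<gamma> u) (\<gamma> v))"
  shows "N a b = N a c \<and> N a b = N b c"
proof -
  have S: "\<And>p q. N p q = N q p" using sym by (meson antisym)
  obtain \<gamma> where g: "\<gamma> a = b" "\<gamma> ` {a,b,c} = {a,b,c}" "inj_on \<gamma> {a,b,c}" "\<And>u v. N u v \<le> N (\<gamma> u) (\<gamma> v)"
    using tr[of a b] by auto
  have gb: "\<gamma> b \<in> {a,b,c}" "\<gamma> c \<in> {a,b,c}" using g(2) by auto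
  have gbn: "\<gamma> b \<noteq> b" using g(1,3) dist by (metis inj_onD insertCI)
  have gcn: "\<gamma> c \<noteq> b" "\<gamma> c \<noteq> \<gamma> b" using g(1,3) dist by (metis inj_onD insertCI)+
  show ?thesis
  proof (cases "\<gamma> b = c")
    case True
    then have "\<gamma> c = a" using gb gcn by auto
    then show ?thesis using g(4)[of a b] g(4)[of b c] g(4)[of c a] g(1) True S[of a c] by simp
  next
    case False
    then have gba: "\<gamma> b = a" using gb gbn by auto
    then have gcc: "\<gamma> c = c" using gb gcn by auto
    have e1: "N a c = N b c" using g(4)[of a c] g(4)[of b c] g(1) gba gcc by simp
    obtain \<delta> where d: "\<delta> a = c" "\<delta> ` {a,b,c} = {a,b,c}" "inj_on \<delta> {a,b,c}" "\<And>u v. N u v \<le> N (\<delta> u) (\<delta> v)"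
      using tr[of a c] by auto
    have db: "\<delta> b \<in> {a,b,c}" "\<delta> c \<in> {a,b,c}" using d(2) by auto
    have dcn: "\<delta> c \<noteq> c" using d(1,3) dist by (metis inj_onD insertCI)
    have dbn: "\<delta> b \<noteq> c" "\<delta> b \<noteq> \<delta> c" using d(1,3) dist by (metis inj_onD insertCI)+
    show ?thesis
    proof (cases "\<delta> c = a")
      case True
      then have "\<delta> b = b" using db dbn by auto
      then have "N a b = N b c" using d(4)[of a b] d(4)[of c b] d(1) True S[of c b] by simp
      then show ?thesis using e1 by simp
    next
      case False
      then have dcb: "\<delta> c = b" using db dcn by auto
      then have "\<delta> b = a" using db dbn by auto
      then have "N a c = N b a" using d(4)[of a c] d(4)[of c b] d(4)[of b a] d(1) dcb S[of c b] by simp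
      then show ?thesis using e1 S[of b a] by simp
    qed
  qed
qed



context LT begin

lemma gc_sym: "0 \<le> x \<Longrightarrow> gc p q x = gc q p x"
  using gc_rev_le by (meson antisym)

lemma gc_all_eq:
  assumes x: "0 \<le> x" and pq: "p \<in> P" "q \<in> P" "p \<noteq> q"
  shows "gc p q x = gc w1 w2 x"
proof -
  obtain \<Gamma> where \<Gamma>: "\<forall>\<gamma>\<in>\<Gamma>. graph_automorphism K EH \<gamma> \<and> \<gamma> ` P = P" "\<forall>p\<in>P. \<forall>q\<in>P. \<exists>\<gamma>\<in>\<Gamma>. \<gamma> p = q"
    using gad unfolding gadget_def by blast
  have d: "w1 \<noteq> w2" "w1 \<noteq> w3" "w2 \<noteq> w3" using gad by (auto simp: gadget_def)
  have e: "gc w1 w2 x = gc w1 w3 x \<and> gc w1 w2 x = gc w2 w3 x"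
  proof (rule three_eq[where N = "\<lambda>p q. gc p q x", OF d])
    show "\<And>p q. gc p q x \<le> gc q p x" using gc_rev_le x by blast
    fix p q assume "p \<in> P" "q \<in> P"
    then obtain \<gamma> where g: "\<gamma> \<in> \<Gamma>" "\<gamma> p = q" using \<Gamma>(2) by blast
    then have a: "graph_automorphism K EH \<gamma>" "\<gamma> ` P = P" using \<Gamma>(1) by auto
    have "inj_on \<gamma> K" using a(1) by (simp add: graph_automorphism_def bij_betw_def)
    then have "inj_on \<gamma> P" using P_sub_K by (rule inj_on_subset)
    then show "\<exists>\<gamma>. \<gamma> p = q \<and> \<gamma> ` P = P \<and> inj_on \<gamma> P \<and> (\<forall>u v. gc u v x \<le> gc (\<gamma> u) (\<gamma> v) x)"
      using a g(2) gc_aut_le[OF a(1) x] by blast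
  qed
  have s: "gc w2 w1 x = gc w1 w2 x" "gc w3 w1 x = gc w1 w3 x" "gc w3 w2 x = gc w2 w3 x"
    using gc_sym[OF x] by auto
  show ?thesis using pq e s by auto
qed

lemma gp_props:
  "saw E e vs f \<Longrightarrow> length (gp e vs f) = length vs \<and>
     (\<forall>A\<in>set (gp e vs f). \<exists>p q. A = gsaw p q \<and> p \<in> P \<and> q \<in> P \<and> p \<noteq> q)"
proof (induction vs arbitrary: e)
  case (Cons v vs)
  define e' where "e' = nx v vs f"
  have s: "e \<in> E" "v \<in> e" "v \<in> e'" "e \<notin> set (ml e' vs f)" "saw E e' vs f"
    using Cons.prems unfolding saw_Cons e'_def by auto
  have e'E: "e' \<in> E" using saw_e[OF s(5)] .
  have ne: "e \<noteq> e'" using s(4) ml_hd_mem by metis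
  have "port v e \<in> P" "port v e' \<in> P" using port_in s(1,2) e'E s(3) by auto
  moreover have "port v e \<noteq> port v e'" using port_inj[OF s(1) e'E s(2) s(3)] ne by blast
  ultimately show ?case using Cons.IH[OF s(5)] by (auto simp: e'_def)
qed simp

lemma gadget_series_eq:
  assumes V: "V \<noteq> {}" and x: "0 \<le> x"
  shows "gadget_series V E K EH port x = gc w1 w2 x"
proof -
  define v where "v = (SOME v. v \<in> V)"
  have vV: "v \<in> V" using V by (simp add: v_def some_in_eq)
  have c3: "card (incident_edges E v) = 3" using cub vV by (simp add: cubic_def)
  then obtain e1 e2 where "e1 \<in> incident_edges E v" "e2 \<in> incident_edges E v" "e1 \<noteq> e2"
    unfolding card_3_iff by blast
  then have ex: "\<exists>pr. (case pr of (e1, e2) \<Rightarrow> e1 \<in> incident_edges E v \<and> e2 \<in> incident_edges E v \<and> e1 \<noteq> e2)"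
    by (intro exI[of _ "(e1,e2)"]) simp
  define pr where "pr = (SOME pr. case pr of (e1, e2) \<Rightarrow> e1 \<in> incident_edges E v \<and> e2 \<in> incident_edges E v \<and> e1 \<noteq> e2)"
  obtain a b where pr: "pr = (a,b)" by (cases pr)
  have ab: "a \<in> incident_edges E v" "b \<in> incident_edges E v" "a \<noteq> b"
    using someI_ex[OF ex] unfolding pr_def[symmetric] pr by auto
  have aE: "a \<in> E" "v \<in> a" and bE: "b \<in> E" "v \<in> b" using ab by (auto simp: incident_edges_def)
  have gs: "gadget_series V E K EH port x =
     (\<Sum>(e, vs, f) \<in> {(e, vs, f). saw E1 e vs f \<and> e = lt a \<and> f = lt b \<and> set vs \<subseteq> {v} \<times> K}. x ^ length vs)"
    unfolding gadget_series_def Let_def v_def[symmetric] pr_def[symmetric] pr by simp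
  have Seq: "{(e, vs, f). saw E1 e vs f \<and> e = lt a \<and> f = lt b \<and> set vs \<subseteq> {v} \<times> K} =
       (\<lambda>ls. (lt a, map (Pair v) ls, lt b)) ` gsaw (port v a) (port v b)"
  proof (rule equalityI)
    show "{(e, vs, f). saw E1 e vs f \<and> e = lt a \<and> f = lt b \<and> set vs \<subseteq> {v} \<times> K} \<subseteq>
       (\<lambda>ls. (lt a, map (Pair v) ls, lt b)) ` gsaw (port v a) (port v b)"
    proof
      fix y assume "y \<in> {(e, vs, f). saw E1 e vs f \<and> e = lt a \<and> f = lt b \<and> set vs \<subseteq> {v} \<times> K}"
      then obtain vs where y: "y = (lt a, vs, lt b)" "saw E1 (lt a) vs (lt b)" "set vs \<subseteq> {v} \<times> K"
        by auto
      have "\<forall>q\<in>set vs. fst q = v" using y(3) by auto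
      then have vs: "vs = map (Pair v) (map snd vs)" using map_Pair_snd[of vs v] by simp
      have "vs \<noteq> []"
      proof
        assume "vs = []"
        then have "lt a = lt b" using y(2) by (simp add: saw_Nil)
        then show False using ab(3) lt_inj by blast
      qed
      then have "map snd vs \<noteq> []" by simp
      then have "map snd vs \<in> gsaw (port v a) (port v b)"
        using block_saw[OF aE(1) bE(1)] y(2) vs by metis
      then show "y \<in> (\<lambda>ls. (lt a, map (Pair v) ls, lt b)) ` gsaw (port v a) (port v b)"
        using y(1) vs by blast
    qed
    show "(\<lambda>ls. (lt a, map (Pair v) ls, lt b)) ` gsaw (port v a) (port v b) \<subseteq>
       {(e, vs, f). saw E1 e vs f \<and> e = lt a \<and> f = lt b \<and> set vs \<subseteq> {v} \<times> K}"
    proof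
      fix y assume "y \<in> (\<lambda>ls. (lt a, map (Pair v) ls, lt b)) ` gsaw (port v a) (port v b)"
      then obtain ls where y: "y = (lt a, map (Pair v) ls, lt b)" "ls \<in> gsaw (port v a) (port v b)" by blast
      have "ls \<noteq> []" "set ls \<subseteq> K" using y(2) by (auto simp: gsaw_def)
      then have "saw E1 (lt a) (map (Pair v) ls) (lt b)"
        using block_saw[OF aE(1) bE(1)] y(2) aE(2) bE(2) ab(3) by blast
      then show "y \<in> {(e, vs, f). saw E1 e vs f \<and> e = lt a \<and> f = lt b \<and> set vs \<subseteq> {v} \<times> K}"
        using y(1) \<open>set ls \<subseteq> K\<close> by auto
    qed
  qed
  have inj: "inj_on (\<lambda>ls. (lt a, map (Pair v) ls, lt b)) (gsaw (port v a) (port v b))"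
    by (auto simp: inj_on_def)
  have "gadget_series V E K EH port x = gc (port v a) (port v b) x"
    unfolding gs Seq gc_def by (subst sum.reindex[OF inj]) simp
  also have "\<dots> = gc w1 w2 x"
    using gc_all_eq[OF x] port_in[OF aE] port_in[OF bE] port_inj[OF aE(1) bE(1) aE(2) bE(2)] ab(3) by blast
  finally show ?thesis .
qed

end


context LT begin

lemma fiber_sum:
  assumes x: "0 \<le> x" and s: "saw E e vs f"
  shows "(\<Sum>lss\<in>listset (gp e vs f). ennreal x ^ length (fl vs lss)) = ennreal (gc w1 w2 x) ^ length vs"
proof -
  have gp: "length (gp e vs f) = length vs"
    "\<forall>A\<in>set (gp e vs f). \<exists>p q. A = gsaw p q \<and> p \<in> P \<and> q \<in> P \<and> p \<noteq> q"
    using gp_props[OF s] by auto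
  have fin: "\<forall>A\<in>set (gp e vs f). finite A"
  proof
    fix A assume "A \<in> set (gp e vs f)"
    then obtain p q where "A = gsaw p q" using gp(2) by blast
    then show "finite A" by (simp add: finite_gsaw)
  qed
  have "(\<Sum>lss\<in>listset (gp e vs f). ennreal x ^ length (fl vs lss)) =
        (\<Sum>lss\<in>listset (gp e vs f). prod_list (map (\<lambda>l. ennreal x ^ length l) lss))"
  proof (rule sum.cong)
    fix lss assume "lss \<in> listset (gp e vs f)"
    then have "length lss = length vs" using listset_gp by blast
    then show "ennreal x ^ length (fl vs lss) = prod_list (map (\<lambda>l. ennreal x ^ length l) lss)"
      by (simp add: length_fl pow_sum_list)
  qed simp
  also have "\<dots> = prod_list (map (\<lambda>A. \<Sum>l\<in>A. ennreal x ^ length l) (gp e vs f))"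
    by (rule sum_listset[OF fin])
  also have "\<dots> = ennreal (gc w1 w2 x) ^ length (gp e vs f)"
  proof (rule prod_list_const, rule ballI)
    fix A assume "A \<in> set (gp e vs f)"
    then obtain p q where pq: "A = gsaw p q" "p \<in> P" "q \<in> P" "p \<noteq> q" using gp(2) by blast
    have "(\<Sum>l\<in>A. ennreal x ^ length l) = (\<Sum>l\<in>A. ennreal (x ^ length l))"
      by (rule sum.cong[OF refl]) (rule ennreal_power[OF x])
    also have "\<dots> = ennreal (\<Sum>l\<in>A. x ^ length l)" by (rule sum_ennreal) (simp add: x)
    also have "\<dots> = ennreal (gc p q x)" by (simp add: gc_def pq(1))
    also have "\<dots> = ennreal (gc w1 w2 x)" using gc_all_eq[OF x pq(2-4)] by simp
    finally show "(\<Sum>l\<in>A. ennreal x ^ length l) = ennreal (gc w1 w2 x)" .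
  qed
  finally show ?thesis using gp(1) by simp
qed

lemma part1:
  assumes XE: "X \<subseteq> E" and V: "V \<noteq> {}" and x: "0 < x"
  shows "walk_series {(e, vs, f) \<in> saw_gen E. e \<in> X} (gadget_series V E K EH port x)
       = walk_series {(e, vs, f) \<in> saw_gen E1. e \<in> lt ` X \<and> f \<in> lt ` E} x"
proof -
  define g where "g = gc w1 w2 x"
  have gs: "gadget_series V E K EH port x = g" using gadget_series_eq V x g_def by simp
  define S0 where "S0 = {(e, vs, f) \<in> saw_gen E. e \<in> X}"
  define S1 where "S1 = {(e, vs, f) \<in> saw_gen E1. e \<in> lt ` X \<and> f \<in> lt ` E}"
  define B where "B = (\<lambda>(e::'v set, vs::'v list, f::'v set). listset (gp e vs f))"
  define k where "k = (\<lambda>((e::'v set, vs::'v list, f::'v set), lss::'g list list). (lt e, fl vs lss, lt f))"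
  have S0mem: "\<And>e vs f. (e,vs,f) \<in> S0 \<longleftrightarrow> saw E e vs f \<and> e \<in> X" by (simp add: S0_def saw_gen_def)
  have S1mem: "\<And>e vs f. (e,vs,f) \<in> S1 \<longleftrightarrow> saw E1 e vs f \<and> e \<in> lt ` X \<and> f \<in> lt ` E"
    by (simp add: S1_def saw_gen_def)
  have Sigmem: "\<And>e vs f lss. ((e,vs,f),lss) \<in> Sigma S0 B \<longleftrightarrow> saw E e vs f \<and> e \<in> X \<and> lss \<in> listset (gp e vs f)"
    by (simp add: S0mem B_def)
  have kval: "\<And>e vs f lss. k ((e,vs,f),lss) = (lt e, fl vs lss, lt f)" by (simp add: k_def)
  have img: "k ` Sigma S0 B = S1"
  proof (rule equalityI)
    show "k ` Sigma S0 B \<subseteq> S1"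
    proof
      fix y assume "y \<in> k ` Sigma S0 B"
      then obtain z where z: "z \<in> Sigma S0 B" "y = k z" by blast
      obtain e vs f lss where zz: "z = ((e,vs,f),lss)" by (metis prod.collapse)
      have h: "saw E e vs f" "e \<in> X" "lss \<in> listset (gp e vs f)" using z(1) zz Sigmem by auto
      have "saw E1 (lt e) (fl vs lss) (lt f)" using construct[OF h(1) h(3)] by blast
      moreover have "f \<in> E" using saw_f[OF h(1)] .
      ultimately show "y \<in> S1" using z(2) zz kval S1mem h(2) by auto
    qed
    show "S1 \<subseteq> k ` Sigma S0 B"
    proof
      fix y assume y1: "y \<in> S1"
      obtain E' ws F' where y: "y = (E', ws, F')" by (metis prod.collapse)
      have h: "saw E1 E' ws F'" "E' \<in> lt ` X" "F' \<in> lt ` E" using y1 y S1mem by auto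
      then obtain e f where ef: "E' = lt e" "e \<in> X" "F' = lt f" "f \<in> E" by blast
      have eE: "e \<in> E" using ef(2) XE by blast
      obtain vs lss where d: "ws = fl vs lss" "saw E e vs f" "lss \<in> listset (gp e vs f)"
        using decompose[OF _ eE ef(4)] h(1) ef by blast
      have "((e,vs,f),lss) \<in> Sigma S0 B" using Sigmem d ef(2) by blast
      moreover have "y = k ((e,vs,f),lss)" using y ef d kval by simp
      ultimately show "y \<in> k ` Sigma S0 B" by blast
    qed
  qed
  have inj: "inj_on k (Sigma S0 B)"
  proof (rule inj_onI)
    fix z1 z2 assume z: "z1 \<in> Sigma S0 B" "z2 \<in> Sigma S0 B" "k z1 = k z2"
    obtain e vs f lss where z1: "z1 = ((e,vs,f),lss)" by (metis prod.collapse)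
    obtain e' vs' f' lss' where z2: "z2 = ((e',vs',f'),lss')" by (metis prod.collapse)
    have h1: "saw E e vs f" "lss \<in> listset (gp e vs f)" using z(1) z1 Sigmem by auto
    have h2: "saw E e' vs' f'" "lss' \<in> listset (gp e' vs' f')" using z(2) z2 Sigmem by auto
    have eq: "lt e = lt e'" "fl vs lss = fl vs' lss'" "lt f = lt f'" using z(3) z1 z2 kval by auto
    have "vs = vs' \<and> lss = lss'"
      using fl_inj[OF saw_distinct[OF h1(1)] _ _ _ _ saw_distinct[OF h2(1)] eq(2)]
        listset_gp[OF h1(2)] listset_gp[OF h2(2)] by blast
    then show "z1 = z2" using z1 z2 eq(1,3) lt_inj by blast
  qed
  have finB: "\<And>\<sigma>. \<sigma> \<in> S0 \<Longrightarrow> finite (B \<sigma>)"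
  proof -
    fix \<sigma> assume "\<sigma> \<in> S0"
    obtain e vs f where \<sigma>: "\<sigma> = (e,vs,f)" by (metis prod.collapse)
    have "saw E e vs f" using \<open>\<sigma> \<in> S0\<close> \<sigma> S0mem by auto
    then have gp2: "\<forall>A\<in>set (gp e vs f). \<exists>p q. A = gsaw p q \<and> p \<in> P \<and> q \<in> P \<and> p \<noteq> q"
      using gp_props by blast
    have "\<forall>A\<in>set (gp e vs f). finite A"
    proof
      fix A assume "A \<in> set (gp e vs f)"
      then obtain p q where "A = gsaw p q" using gp2 by blast
      then show "finite A" by (simp add: finite_gsaw)
    qed
    then show "finite (B \<sigma>)" by (simp add: \<sigma> B_def finite_listset)
  qed
  have "walk_series S1 x = infsum (\<lambda>\<pi>. ennreal x ^ length (fst (snd \<pi>))) (k ` Sigma S0 B)"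
    by (simp add: walk_series_def img)
  also have "\<dots> = infsum ((\<lambda>\<pi>. ennreal x ^ length (fst (snd \<pi>))) \<circ> k) (Sigma S0 B)"
    by (rule infsum_reindex[OF inj])
  also have "\<dots> = infsum (\<lambda>\<sigma>. \<Sum>lss\<in>B \<sigma>. ((\<lambda>\<pi>. ennreal x ^ length (fst (snd \<pi>))) \<circ> k) (\<sigma>, lss)) S0"
    by (rule infsum_Sigma_fin_enn[OF finB])
  also have "\<dots> = infsum (\<lambda>\<pi>. ennreal g ^ length (fst (snd \<pi>))) S0"
  proof (rule infsum_cong)
    fix \<sigma> assume "\<sigma> \<in> S0"
    obtain e vs f where \<sigma>: "\<sigma> = (e,vs,f)" by (metis prod.collapse)
    have s: "saw E e vs f" using \<open>\<sigma> \<in> S0\<close> \<sigma> S0mem by auto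
    have "(\<Sum>lss\<in>B \<sigma>. ((\<lambda>\<pi>. ennreal x ^ length (fst (snd \<pi>))) \<circ> k) (\<sigma>, lss)) =
          (\<Sum>lss\<in>listset (gp e vs f). ennreal x ^ length (fl vs lss))"
      by (simp add: \<sigma> B_def kval)
    also have "\<dots> = ennreal g ^ length vs" using fiber_sum[OF _ s] x by (simp add: g_def)
    finally show "(\<Sum>lss\<in>B \<sigma>. ((\<lambda>\<pi>. ennreal x ^ length (fst (snd \<pi>))) \<circ> k) (\<sigma>, lss)) =
          ennreal g ^ length (fst (snd \<sigma>))" by (simp add: \<sigma>)
  qed
  finally show ?thesis using gs by (simp add: walk_series_def S0_def S1_def)
qed

end


lemma infsum_mono_enn: "A \<subseteq> B \<Longrightarrow> infsum (f::'a \<Rightarrow> ennreal) A \<le> infsum f B"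
  by (rule infsum_le_enn) (auto intro: fin_le_infsum_enn)

lemma infsum_Un_le_enn: "infsum (f::'a \<Rightarrow> ennreal) (A \<union> B) \<le> infsum f A + infsum f B"
proof (rule infsum_le_enn)
  fix F assume F: "finite F" "F \<subseteq> A \<union> B"
  have "sum f F = sum f (F \<inter> A) + sum f (F - A)"
  proof -
    have "F = (F \<inter> A) \<union> (F - A)" by blast
    moreover have "(F \<inter> A) \<inter> (F - A) = {}" by blast
    ultimately show ?thesis using F(1) sum.union_disjoint[of "F \<inter> A" "F - A" f] by simp
  qed
  also have "\<dots> \<le> infsum f A + infsum f B"
    using F by (intro add_mono fin_le_infsum_enn) auto
  finally show "sum f F \<le> infsum f A + infsum f B" .
qed

lemma group_bound:
  fixes f :: "'a \<Rightarrow> ennreal" and g :: "'b \<Rightarrow> ennreal"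
  assumes hB: "\<And>a. a \<in> A \<Longrightarrow> h a \<in> B"
    and fib: "\<And>b. b \<in> B \<Longrightarrow> finite {a\<in>A. h a = b} \<and> card {a\<in>A. h a = b} \<le> N"
    and le: "\<And>a. a \<in> A \<Longrightarrow> f a \<le> C * g (h a)"
  shows "infsum f A \<le> of_nat N * C * infsum g B"
proof (rule infsum_le_enn)
  fix F assume F: "finite F" "F \<subseteq> A"
  have "sum f F = (\<Sum>b\<in>h ` F. sum f {a. a \<in> F \<and> h a = b})" by (rule sum.image_gen[OF F(1)])
  also have "\<dots> \<le> (\<Sum>b\<in>h ` F. of_nat N * C * g b)"
  proof (rule sum_mono)
    fix b assume b: "b \<in> h ` F"
    then have bB: "b \<in> B" using F hB by blast
    have "sum f {a. a \<in> F \<and> h a = b} \<le> of_nat (card {a. a \<in> F \<and> h a = b}) * (C * g b)"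
      by (rule sum_bounded_above) (use F le in auto)
    also have "card {a. a \<in> F \<and> h a = b} \<le> N"
    proof -
      have "{a. a \<in> F \<and> h a = b} \<subseteq> {a\<in>A. h a = b}" using F by auto
      then have "card {a. a \<in> F \<and> h a = b} \<le> card {a\<in>A. h a = b}" using fib[OF bB] by (intro card_mono) auto
      then show ?thesis using fib[OF bB] by simp
    qed
    then have "of_nat (card {a. a \<in> F \<and> h a = b}) * (C * g b) \<le> of_nat N * (C * g b)"
      by (intro mult_right_mono) auto
    finally show "sum f {a. a \<in> F \<and> h a = b} \<le> of_nat N * C * g b" by (simp add: mult.assoc)
  qed
  also have "\<dots> = of_nat N * C * sum g (h ` F)" by (simp add: sum_distrib_left)
  also have "\<dots> \<le> of_nat N * C * infsum g B"
    using F hB by (intro mult_left_mono fin_le_infsum_enn) auto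
  finally show "sum f F \<le> of_nat N * C * infsum g B" .
qed

lemma saw_rev: "saw E e vs f \<Longrightarrow> saw E f (rev vs) e"
proof (cases "vs = []")
  case True
  assume "saw E e vs f" then show ?thesis using True by (simp add: saw_Nil)
next
  case False
  assume s: "saw E e vs f"
  have "distinct (e # walk_edges vs @ [f])" using s False by (simp add: saw_def)
  then have d: "distinct (rev (e # walk_edges vs @ [f]))" by (simp only: distinct_rev)
  have "f # walk_edges (rev vs) @ [e] = rev (e # walk_edges vs @ [f])" by (simp add: walk_edges_rev)
  then have "distinct (f # walk_edges (rev vs) @ [e])" using d by (simp only:)
  then show ?thesis using s False by (auto simp: saw_def hd_rev last_rev walk_edges_rev)
qed

lemma ml_rev: "saw E e vs f \<Longrightarrow> set (ml f (rev vs) e) = set (ml e vs f)"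
  by (cases "vs = []") (auto simp: ml_def walk_edges_rev saw_Nil)

context LT begin

lemma fst_Int_mem: "F \<in> Int_edges w \<Longrightarrow> p \<in> F \<Longrightarrow> fst p = w"
  using fst_Int by fastforce

lemma we_fst: "\<forall>q\<in>set A. fst q = w \<Longrightarrow> set (walk_edges A) \<subseteq> Int_edges w"
  using we_map_Int[of w "map snd A"] map_Pair_snd[of A w] by simp

lemma take_split:
  assumes s: "saw E1 E' ws F'" and w: "E' \<in> Int_edges w" and ne: "ws \<noteq> []"
  defines "A \<equiv> takeWhile (\<lambda>q. fst q = w) ws" and "B \<equiv> dropWhile (\<lambda>q. fst q = w) ws"
  shows "ws = A @ B" "A \<noteq> []" "set A \<subseteq> {w} \<times> K" "\<forall>q\<in>set A. fst q = w"
    "B \<noteq> [] \<Longrightarrow> \<exists>e1. e1 \<in> E \<and> w \<in> e1 \<and> {last A, hd B} = lt e1 \<and> saw E1 (lt e1) B F' \<and>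
        lt e1 \<in> set (ml E' ws F')"
proof -
  show wsAB: "ws = A @ B" by (simp add: A_def B_def)
  have "hd ws \<in> E'" using s ne by (simp add: saw_def)
  then have hw: "fst (hd ws) = w" using fst_Int_mem[OF w] by blast
  show Ane: "A \<noteq> []" using ne hw by (cases ws) (auto simp: A_def)
  show Afst: "\<forall>q\<in>set A. fst q = w" unfolding A_def by (blast dest: set_takeWhileD)
  have "set A \<subseteq> V \<times> K" using saw_verts[OF s] wsAB by auto
  then show "set A \<subseteq> {w} \<times> K" using Afst by auto
  assume Bne: "B \<noteq> []"
  obtain u b where hdB: "hd B = (u,b)" by (cases "hd B")
  have uw: "u \<noteq> w" using hd_dropWhile[OF Bne[unfolded B_def]] hdB by (simp add: B_def)
  have "saw E1 E' (A @ B) F'" using s wsAB by simp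
  from saw_append[OF Ane Bne, THEN iffD1, OF this]
  have sp: "saw E1 E' A {last A, hd B}" "saw E1 {last A, hd B} B F'" by blast+
  obtain a where lastA: "last A = (w, a)" using Afst Ane by (metis last_in_set prod.collapse)
  have "{last A, hd B} \<in> E1" using saw_e[OF sp(2)] .
  then have "{(w, a), (u, b)} \<in> E1" using lastA hdB by simp
  moreover have "w \<noteq> u" using uw by simp
  ultimately have cr: "{w,u} \<in> E" "a = port w {w,u}" "b = port u {w,u}" using cross_in_E1 by blast+
  have m: "{last A, hd B} = lt {w,u}" using lastA hdB cr lt_pair[of w u] by simp
  have "lt {w,u} \<in> set (ml E' ws F')"
    using ml_append_set[OF Ane Bne, of E' F'] wsAB m by (simp add: ml_def)
  then show "\<exists>e1. e1 \<in> E \<and> w \<in> e1 \<and> {last A, hd B} = lt e1 \<and> saw E1 (lt e1) B F' \<and> lt e1 \<in> set (ml E' ws F')"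
    using cr(1) m sp(2) by (intro exI[of _ "{w,u}"]) simp
qed

lemma stay:
  assumes s: "saw E1 E' ws F'" and w: "E' \<in> Int_edges w" and no: "set (ml E' ws F') \<inter> lt ` E = {}"
  shows "set ws \<subseteq> {w} \<times> K \<and> F' \<in> Int_edges w"
proof (cases "ws = []")
  case True
  then show ?thesis using s w by (simp add: saw_Nil)
next
  case False
  define A where "A = takeWhile (\<lambda>q. fst q = w) ws"
  define B where "B = dropWhile (\<lambda>q. fst q = w) ws"
  note ts = take_split[OF s w False, folded A_def B_def]
  have B: "B = []"
  proof (rule ccontr)
    assume "B \<noteq> []"
    then obtain e1 where "e1 \<in> E" "lt e1 \<in> set (ml E' ws F')" using ts(5) by blast
    then show False using no by blast
  qed
  then have wsA: "ws = A" using ts(1) by simp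
  have Wfst: "\<forall>q\<in>set ws. fst q = w" using ts(4) unfolding wsA .
  have WK: "set ws \<subseteq> {w} \<times> K" using ts(3) unfolding wsA .
  have lF: "last ws \<in> F'" and FE: "F' \<in> E1" using s False by (auto simp: saw_def)
  have nl: "F' \<notin> lt ` E" using no False by (auto simp: ml_def)
  obtain u c d where F: "F' = {(u,c),(u,d)}"
  proof -
    assume that: "\<And>u c d. F' = {(u,c),(u,d)} \<Longrightarrow> thesis"
    from E1_cases[OF FE] show thesis
    proof
      assume "\<exists>v a b. v \<in> V \<and> {a,b} \<in> EH \<and> F' = {(v,a),(v,b)}"
      then show thesis by (elim exE conjE) (rule that, assumption)
    next
      assume "\<exists>e\<in>E. F' = lt e"
      then obtain e where e: "e \<in> E" "F' = lt e" by (elim bexE) simp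
      have "lt e \<in> lt ` E" using e(1) by (rule imageI)
      then have "F' \<in> lt ` E" using e(2) by simp
      then show thesis using nl by simp
    qed
  qed
  have "last ws \<in> set ws" using False by simp
  then have "fst (last ws) = w" using Wfst by blast
  moreover have "fst (last ws) = u" using lF F by auto
  ultimately have "u = w" by simp
  then have "F' \<in> Int_edges w" using F Int_edgesI by simp
  then show ?thesis using WK by simp
qed

lemma pre_split:
  assumes s: "saw E1 E' ws F'" and w: "E' \<in> Int_edges w" and ex: "\<exists>e\<in>E. lt e \<in> set (ml E' ws F')"
  shows "\<exists>P R e1. ws = P @ R \<and> set P \<subseteq> {w} \<times> K \<and> e1 \<in> E \<and> w \<in> e1 \<and> saw E1 (lt e1) R F'"
proof (cases "ws = []")
  case True
  then obtain e where e: "e \<in> E" "lt e = E'" using ex by (auto simp: ml_def)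
  then have "lt e \<in> Int_edges w" using w by simp
  then show ?thesis using lt_not_int[OF e(1)] by blast
next
  case False
  define A where "A = takeWhile (\<lambda>q. fst q = w) ws"
  define B where "B = dropWhile (\<lambda>q. fst q = w) ws"
  note ts = take_split[OF s w False, folded A_def B_def]
  show ?thesis
  proof (cases "B = []")
    case False
    then obtain e1 where "e1 \<in> E" "w \<in> e1" "saw E1 (lt e1) B F'" using ts(5) by blast
    then show ?thesis using ts(1,3) by blast
  next
    case True
    then have wsA: "ws = A" using ts(1) by simp
    have Wfst: "\<forall>q\<in>set ws. fst q = w" using ts(4) unfolding wsA .
    have WK: "set ws \<subseteq> {w} \<times> K" using ts(3) unfolding wsA .
    obtain e where e: "e \<in> E" "lt e \<in> set (ml E' ws F')" using ex by blast
    have "lt e \<noteq> E'"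
    proof
      assume "lt e = E'"
      then have "lt e \<in> Int_edges w" using w by simp
      then show False using lt_not_int[OF e(1), of w] by blast
    qed
    moreover have "lt e \<notin> set (walk_edges ws)"
    proof
      have "set (walk_edges ws) \<subseteq> Int_edges w" using Wfst by (rule we_fst)
      moreover assume "lt e \<in> set (walk_edges ws)"
      ultimately have "lt e \<in> Int_edges w" by blast
      then show False using lt_not_int[OF e(1)] by blast
    qed
    ultimately have ltF: "lt e = F'" using e(2) \<open>ws \<noteq> []\<close> by (auto simp: ml_def)
    have "last ws \<in> F'" using s \<open>ws \<noteq> []\<close> by (simp add: saw_def)
    moreover have "last ws \<in> set ws" using \<open>ws \<noteq> []\<close> by simp
    then have "fst (last ws) = w" using Wfst by blast
    ultimately have "w \<in> e" using mem_lt ltF by metis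
    moreover have "saw E1 (lt e) [] F'" using ltF lt_in_E1[OF e(1)] by (simp add: saw_Nil)
    moreover have "ws = ws @ []" by simp
    ultimately show ?thesis using WK e(1) by blast
  qed
qed

lemma suf_split:
  assumes s: "saw E1 E' ws F'" and w: "F' \<in> Int_edges u" and ex: "\<exists>e\<in>E. lt e \<in> set (ml E' ws F')"
  shows "\<exists>R S f2. ws = R @ S \<and> set S \<subseteq> {u} \<times> K \<and> f2 \<in> E \<and> u \<in> f2 \<and> saw E1 E' R (lt f2)"
proof -
  have s': "saw E1 F' (rev ws) E'" using saw_rev[OF s] .
  have "\<exists>e\<in>E. lt e \<in> set (ml F' (rev ws) E')" using ex ml_rev[OF s] by simp
  from pre_split[OF s' w this] obtain P R e1 where
    h: "rev ws = P @ R" "set P \<subseteq> {u} \<times> K" "e1 \<in> E" "u \<in> e1" "saw E1 (lt e1) R E'" by blast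
  have "ws = rev R @ rev P" using h(1) by (metis rev_append rev_rev_ident)
  moreover have "saw E1 E' (rev R) (lt e1)" using saw_rev[OF h(5)] .
  ultimately show ?thesis using h(2-4) by (intro exI[of _ "rev R"] exI[of _ "rev P"] exI[of _ e1]) auto
qed

end


context LT begin

definition DL :: "'g list set" where "DL = {xs. set xs \<subseteq> K \<and> distinct xs}"

lemma finite_DL: "finite DL" unfolding DL_def using finite_subset_distinct[OF finite_K] .

lemma DL_len: "l \<in> DL \<Longrightarrow> length l \<le> card K"
  unfolding DL_def using finite_K by (metis (mono_tags, lifting) card_mono distinct_card mem_Collect_eq)

lemma finite_EH: "finite EH"
proof (rule finite_subset[OF _ finite_Pow_iff[THEN iffD2, OF finite_K]])
  show "EH \<subseteq> Pow K"
  proof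
    fix h assume "h \<in> EH"
    from EH_edge[OF this] obtain a b where "a \<in> K" "b \<in> K" "h = {a,b}" by blast
    then show "h \<in> Pow K" by simp
  qed
qed

lemma block_code:
  assumes "set Pf \<subseteq> {w} \<times> K" "distinct Pf"
  shows "map snd Pf \<in> DL \<and> Pf = map (Pair w) (map snd Pf)"
proof -
  have "\<forall>q\<in>set Pf. fst q = w" using assms(1) by auto
  then have eq: "Pf = map (Pair w) (map snd Pf)" using map_Pair_snd by metis
  have "distinct (map (Pair w) (map snd Pf))" by (subst eq[symmetric]) (rule assms(2))
  then have "distinct (map snd Pf)" unfolding distinct_map by blast
  moreover have "set (map snd Pf) \<subseteq> K" using assms(1) by auto
  ultimately show ?thesis using eq by (simp add: DL_def)
qed

definition PreL :: "('v \<times> 'g) set \<Rightarrow> (('v \<times> 'g) set \<times> ('v \<times> 'g) list) set" where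
  "PreL L = insert (L, []) ((\<lambda>(w,h,l). (Pair w ` h, map (Pair w) l)) ` (fst ` L \<times> EH \<times> DL))"

definition SufL :: "('v \<times> 'g) set \<Rightarrow> (('v \<times> 'g) list \<times> ('v \<times> 'g) set) set" where
  "SufL L = insert ([], L) ((\<lambda>(u,h,l). (map (Pair u) l, Pair u ` h)) ` (fst ` L \<times> EH \<times> DL))"

definition Img :: "('v \<times> 'g) set \<times> ('v \<times> 'g) list \<times> ('v \<times> 'g) set \<Rightarrow> (('v \<times> 'g) set \<times> ('v \<times> 'g) list \<times> ('v \<times> 'g) set) set" where
  "Img \<tau> = (\<lambda>((E',Pf),(S,F')). (E', Pf @ fst (snd \<tau>) @ S, F')) ` (PreL (fst \<tau>) \<times> SufL (snd (snd \<tau>)))"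

lemma card_fst_lt: "e \<in> E \<Longrightarrow> card (fst ` lt e) \<le> 2"
  using E_edge[of e] fst_lt[of e] by (auto simp: card_insert_if)

lemma card_PreL: "e \<in> E \<Longrightarrow> finite (PreL (lt e)) \<and> card (PreL (lt e)) \<le> 1 + 2 * card EH * card DL"
proof -
  assume e: "e \<in> E"
  have fin: "finite (fst ` lt e \<times> EH \<times> DL)" using e fst_lt E_edge[OF e] finite_EH finite_DL by auto
  have "card ((\<lambda>(w,h,l). (Pair w ` h, map (Pair w) l)) ` (fst ` lt e \<times> EH \<times> DL)) \<le> card (fst ` lt e \<times> EH \<times> DL)"
    by (rule card_image_le[OF fin])
  also have "\<dots> = card (fst ` lt e) * card EH * card DL" by (simp add: card_cartesian_product)
  also have "\<dots> \<le> 2 * card EH * card DL" using card_fst_lt[OF e] by (intro mult_right_mono) auto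
  finally have c: "card ((\<lambda>(w,h,l). (Pair w ` h, map (Pair w) l)) ` (fst ` lt e \<times> EH \<times> DL)) \<le> 2 * card EH * card DL" .
  show ?thesis unfolding PreL_def using fin c card_insert_le_m1
    by (auto simp: card_insert_if)
qed

lemma card_SufL: "e \<in> E \<Longrightarrow> finite (SufL (lt e)) \<and> card (SufL (lt e)) \<le> 1 + 2 * card EH * card DL"
proof -
  assume e: "e \<in> E"
  have fin: "finite (fst ` lt e \<times> EH \<times> DL)" using e fst_lt E_edge[OF e] finite_EH finite_DL by auto
  have "card ((\<lambda>(u,h,l). (map (Pair u) l, Pair u ` h)) ` (fst ` lt e \<times> EH \<times> DL)) \<le> card (fst ` lt e \<times> EH \<times> DL)"
    by (rule card_image_le[OF fin])
  also have "\<dots> = card (fst ` lt e) * card EH * card DL" by (simp add: card_cartesian_product)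
  also have "\<dots> \<le> 2 * card EH * card DL" using card_fst_lt[OF e] by (intro mult_right_mono) auto
  finally have c: "card ((\<lambda>(u,h,l). (map (Pair u) l, Pair u ` h)) ` (fst ` lt e \<times> EH \<times> DL)) \<le> 2 * card EH * card DL" .
  show ?thesis unfolding SufL_def using fin c
    by (auto simp: card_insert_if)
qed

lemma card_Img:
  assumes "e \<in> E" "f \<in> E"
  shows "finite (Img (lt e, M, lt f)) \<and> card (Img (lt e, M, lt f)) \<le> (1 + 2 * card EH * card DL)^2"
proof -
  let ?N = "1 + 2 * card EH * card DL"
  have a: "finite (PreL (lt e))" "card (PreL (lt e)) \<le> ?N" using card_PreL[OF assms(1)] by auto
  have b: "finite (SufL (lt f))" "card (SufL (lt f)) \<le> ?N" using card_SufL[OF assms(2)] by auto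
  have fin: "finite (PreL (lt e) \<times> SufL (lt f))" using a b by simp
  have "card (Img (lt e, M, lt f)) \<le> card (PreL (lt e) \<times> SufL (lt f))"
    unfolding Img_def by (simp add: card_image_le[OF fin])
  also have "\<dots> = card (PreL (lt e)) * card (SufL (lt f))" by (simp add: card_cartesian_product)
  also have "\<dots> \<le> ?N * ?N" using a(2) b(2) by (rule mult_le_mono)
  finally show ?thesis using fin unfolding Img_def by (simp add: power2_eq_square)
qed

lemma PreL_len: "(E', Pf) \<in> PreL L \<Longrightarrow> length Pf \<le> card K"
  unfolding PreL_def using DL_len by auto

lemma SufL_len: "(S, F') \<in> SufL L \<Longrightarrow> length S \<le> card K"
  unfolding SufL_def using DL_len by auto

lemma Img_len:
  assumes "\<pi> \<in> Img \<tau>"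
  shows "\<exists>p s. p \<le> card K \<and> s \<le> card K \<and> length (fst (snd \<pi>)) = p + length (fst (snd \<tau>)) + s"
proof -
  from assms obtain E' Pf S F' where h: "(E',Pf) \<in> PreL (fst \<tau>)" "(S,F') \<in> SufL (snd (snd \<tau>))"
    "\<pi> = (E', Pf @ fst (snd \<tau>) @ S, F')"
    unfolding Img_def by auto
  then show ?thesis using PreL_len[OF h(1)] SufL_len[OF h(2)]
    by (intro exI[of _ "length Pf"] exI[of _ "length S"]) simp
qed

lemma wt_bound:
  assumes x: "0 < x" and p: "p \<le> card K" and s: "s \<le> card K"
  shows "ennreal x ^ (p + m + s) \<le> ennreal ((max 1 x) ^ (2 * card K)) * ennreal x ^ m"
proof -
  have "x ^ p \<le> (max 1 x) ^ card K"
  proof -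
    have "x ^ p \<le> (max 1 x) ^ p" using x by (intro power_mono) auto
    also have "\<dots> \<le> (max 1 x) ^ card K" using p by (intro power_increasing) auto
    finally show ?thesis .
  qed
  moreover have "x ^ s \<le> (max 1 x) ^ card K"
  proof -
    have "x ^ s \<le> (max 1 x) ^ s" using x by (intro power_mono) auto
    also have "\<dots> \<le> (max 1 x) ^ card K" using s by (intro power_increasing) auto
    finally show ?thesis .
  qed
  ultimately have "x ^ p * x ^ s \<le> (max 1 x) ^ card K * (max 1 x) ^ card K"
    using x by (intro mult_mono) auto
  then have "x ^ p * x ^ s \<le> (max 1 x) ^ (2 * card K)" by (simp add: power_add[symmetric] mult_2)
  then have "x ^ (p + m + s) \<le> (max 1 x) ^ (2 * card K) * x ^ m"
    using x by (simp add: power_add)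
  then have "ennreal (x ^ (p + m + s)) \<le> ennreal ((max 1 x) ^ (2 * card K) * x ^ m)"
    by (rule ennreal_leI)
  then show ?thesis using x by (simp add: ennreal_power ennreal_mult)
qed

end


context LT begin

lemma int_case:
  assumes "F \<in> E1" "F \<notin> lt ` E"
  obtains w a b where "w \<in> V" "{a,b} \<in> EH" "F = {(w,a),(w,b)}"
proof -
  from E1_cases[OF assms(1)] show thesis
  proof
    assume "\<exists>v a b. v \<in> V \<and> {a,b} \<in> EH \<and> F = {(v,a),(v,b)}"
    then show thesis by (elim exE conjE) (rule that, assumption+)
  next
    assume "\<exists>e\<in>E. F = lt e"
    then obtain e where e: "e \<in> E" "F = lt e" by (elim bexE) simp
    have "lt e \<in> lt ` E" using e(1) by (rule imageI)
    then have "F \<in> lt ` E" using e(2) by simp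
    then show thesis using assms(2) by simp
  qed
qed

lemma rest_dec:
  assumes s: "saw E1 E' ws F'" and X1: "E' \<in> E1" "E' \<inter> (W \<times> K) \<noteq> {}"
    and ex: "\<exists>e\<in>E. lt e \<in> set (ml E' ws F')"
  shows "\<exists>\<tau>. \<tau> \<in> {(e, vs, f) \<in> saw_gen E1. e \<in> lt ` {e \<in> E. e \<inter> W \<noteq> {}} \<and> f \<in> lt ` E} \<and>
             (E', ws, F') \<in> Img \<tau>"
proof -
  have dws: "distinct ws" using saw_distinct[OF s] .
  have "\<exists>Pf R e1. ws = Pf @ R \<and> (E', Pf) \<in> PreL (lt e1) \<and> e1 \<in> E \<and> e1 \<inter> W \<noteq> {} \<and> saw E1 (lt e1) R F'"
  proof (cases "E' \<in> lt ` E")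
    case True
    then obtain e1 where e1: "e1 \<in> E" "E' = lt e1" by blast
    obtain p where p: "p \<in> E'" "p \<in> W \<times> K" using X1(2) by blast
    have "fst p \<in> e1" using p(1) e1(2) mem_lt by blast
    moreover have "fst p \<in> W" using p(2) by auto
    ultimately have "e1 \<inter> W \<noteq> {}" by blast
    moreover have "(E', []) \<in> PreL (lt e1)" using e1(2) by (simp add: PreL_def)
    moreover have "saw E1 (lt e1) ws F'" using s e1(2) by simp
    ultimately show ?thesis using e1(1) by (intro exI[of _ "[]"] exI[of _ ws] exI[of _ e1]) simp
  next
    case False
    from int_case[OF X1(1) False] obtain w a b where wab: "w \<in> V" "{a,b} \<in> EH" "E' = {(w,a),(w,b)}" .
    have wI: "E' \<in> Int_edges w" using wab(3) Int_edgesI by simp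
    obtain p where p: "p \<in> E'" "p \<in> W \<times> K" using X1(2) by blast
    have "fst p = w" using p(1) wab(3) by auto
    then have wW: "w \<in> W" using p(2) by auto
    from pre_split[OF s wI ex] obtain Pf R e1 where
      h: "ws = Pf @ R" "set Pf \<subseteq> {w} \<times> K" "e1 \<in> E" "w \<in> e1" "saw E1 (lt e1) R F'" by blast
    have "distinct Pf" using dws h(1) by simp
    from block_code[OF h(2) this] have bc: "map snd Pf \<in> DL" "Pf = map (Pair w) (map snd Pf)" by auto
    have "w \<in> fst ` lt e1" using h(4) fst_lt by simp
    then have "(w, {a,b}, map snd Pf) \<in> fst ` lt e1 \<times> EH \<times> DL" using wab(2) bc(1) by simp
    then have "(Pair w ` {a,b}, map (Pair w) (map snd Pf)) \<in> PreL (lt e1)"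
      unfolding PreL_def by (intro insertI2) (rule image_eqI[where x = "(w, {a,b}, map snd Pf)"], simp_all)
    then have "(E', Pf) \<in> PreL (lt e1)" using wab(3) bc(2) by simp
    moreover have "e1 \<inter> W \<noteq> {}" using h(4) wW by blast
    ultimately show ?thesis using h(1,3,5) by blast
  qed
  then obtain Pf R e1 where pre: "ws = Pf @ R" "(E', Pf) \<in> PreL (lt e1)" "e1 \<in> E" "e1 \<inter> W \<noteq> {}"
    "saw E1 (lt e1) R F'" by blast
  have dR: "distinct R" using dws pre(1) by simp
  have "\<exists>M S f2. R = M @ S \<and> (S, F') \<in> SufL (lt f2) \<and> f2 \<in> E \<and> saw E1 (lt e1) M (lt f2)"
  proof (cases "F' \<in> lt ` E")
    case True
    then obtain f2 where f2: "f2 \<in> E" "F' = lt f2" by blast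
    have "([], F') \<in> SufL (lt f2)" using f2(2) by (simp add: SufL_def)
    then show ?thesis using f2 pre(5) by (intro exI[of _ R] exI[of _ "[]"] exI[of _ f2]) simp
  next
    case False
    have FE: "F' \<in> E1" using saw_f[OF pre(5)] .
    from int_case[OF FE False] obtain u c d where ucd: "u \<in> V" "{c,d} \<in> EH" "F' = {(u,c),(u,d)}" .
    have uI: "F' \<in> Int_edges u" using ucd(3) Int_edgesI by simp
    have "\<exists>e\<in>E. lt e \<in> set (ml (lt e1) R F')" using pre(3) ml_hd_mem by blast
    from suf_split[OF pre(5) uI this] obtain M S f2 where
      h: "R = M @ S" "set S \<subseteq> {u} \<times> K" "f2 \<in> E" "u \<in> f2" "saw E1 (lt e1) M (lt f2)" by blast
    have "distinct S" using dR h(1) by simp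
    from block_code[OF h(2) this] have bc: "map snd S \<in> DL" "S = map (Pair u) (map snd S)" by auto
    have "u \<in> fst ` lt f2" using h(4) fst_lt by simp
    then have "(u, {c,d}, map snd S) \<in> fst ` lt f2 \<times> EH \<times> DL" using ucd(2) bc(1) by simp
    then have "(map (Pair u) (map snd S), Pair u ` {c,d}) \<in> SufL (lt f2)"
      unfolding SufL_def by (intro insertI2) (rule image_eqI[where x = "(u, {c,d}, map snd S)"], simp_all)
    then have "(S, F') \<in> SufL (lt f2)" using ucd(3) bc(2) by simp
    then show ?thesis using h(1,3,5) by blast
  qed
  then obtain M S f2 where suf: "R = M @ S" "(S, F') \<in> SufL (lt f2)" "f2 \<in> E" "saw E1 (lt e1) M (lt f2)"
    by blast
  define \<tau> where "\<tau> = (lt e1, M, lt f2)"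
  have "\<tau> \<in> {(e, vs, f) \<in> saw_gen E1. e \<in> lt ` {e \<in> E. e \<inter> W \<noteq> {}} \<and> f \<in> lt ` E}"
    using suf(3,4) pre(3,4) by (auto simp: \<tau>_def saw_gen_def)
  moreover have "(E', ws, F') \<in> Img \<tau>"
  proof -
    have "((E', Pf), (S, F')) \<in> PreL (fst \<tau>) \<times> SufL (snd (snd \<tau>))" using pre(2) suf(2) by (simp add: \<tau>_def)
    moreover have "(E', ws, F') = (\<lambda>((E',P),(S,F')). (E', P @ fst (snd \<tau>) @ S, F')) ((E', Pf), (S, F'))"
      using pre(1) suf(1) by (simp add: \<tau>_def)
    ultimately show ?thesis unfolding Img_def by (rule rev_image_eqI)
  qed
  ultimately show ?thesis by blast
qed

end


context LT begin

lemma fin_part: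
  assumes W: "finite W"
  shows "finite {\<pi> \<in> {(e, vs, f) \<in> saw_gen E1. e \<in> {e \<in> E1. e \<inter> (W \<times> K) \<noteq> {}}}.
            set (ml (fst \<pi>) (fst (snd \<pi>)) (snd (snd \<pi>))) \<inter> lt ` E = {}}" (is "finite ?Fin")
proof -
  define IW where "IW = (\<lambda>(w,h). Pair w ` h) ` (W \<times> EH)"
  define DLW where "DLW = {xs. set xs \<subseteq> W \<times> K \<and> distinct xs}"
  have sub: "?Fin \<subseteq> IW \<times> DLW \<times> IW"
  proof
    fix \<pi> assume pin: "\<pi> \<in> ?Fin"
    obtain E' ws F' where \<pi>: "\<pi> = (E',ws,F')" by (metis prod.collapse)
    have s: "saw E1 E' ws F'" "E' \<in> E1" "E' \<inter> (W\<times>K) \<noteq> {}" "set (ml E' ws F') \<inter> lt ` E = {}"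
      using pin \<pi> by (auto simp: saw_gen_def)
    have "E' \<notin> lt ` E" using s(4) ml_hd_mem by blast
    from int_case[OF s(2) this] obtain w a b where wab: "w \<in> V" "{a,b} \<in> EH" "E' = {(w,a),(w,b)}" .
    have wI: "E' \<in> Int_edges w" using wab(3) Int_edgesI by simp
    obtain p where p: "p \<in> E'" "p \<in> W \<times> K" using s(3) by blast
    have "fst p = w" using p(1) wab(3) by auto
    then have wW: "w \<in> W" using p(2) by auto
    have st: "set ws \<subseteq> {w} \<times> K" "F' \<in> Int_edges w" using stay[OF s(1) wI s(4)] by auto
    have FE: "F' \<in> E1" using saw_f[OF s(1)] .
    have "F' \<notin> lt ` E" using st(2) lt_not_int by blast
    from int_case[OF FE this] obtain u c d where ucd: "u \<in> V" "{c,d} \<in> EH" "F' = {(u,c),(u,d)}" .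
    have "fst ` F' = {u}" using ucd(3) by simp
    moreover have "fst ` F' = {w}" using fst_Int[OF st(2)] .
    ultimately have uw: "u = w" by simp
    have "E' \<in> IW" unfolding IW_def using wab wW by (intro rev_image_eqI[of "(w, {a,b})"]) auto
    moreover have "F' \<in> IW" unfolding IW_def using ucd uw wW by (intro rev_image_eqI[of "(w, {c,d})"]) auto
    moreover have "ws \<in> DLW" unfolding DLW_def using st(1) wW saw_distinct[OF s(1)] by auto
    ultimately show "\<pi> \<in> IW \<times> DLW \<times> IW" using \<pi> by simp
  qed
  have "finite IW" unfolding IW_def using W finite_EH by simp
  moreover have "finite DLW" unfolding DLW_def using finite_subset_distinct[of "W \<times> K"] W finite_K by simp
  ultimately show ?thesis using sub by (meson finite_SigmaI finite_subset)
qed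

lemma part2:
  assumes W: "finite W" and x: "0 < x"
  shows "walk_series {(e, vs, f) \<in> saw_gen E1. e \<in> {e \<in> E1. e \<inter> (W \<times> K) \<noteq> {}}} x < \<infinity>
     \<longleftrightarrow> walk_series {(e, vs, f) \<in> saw_gen E1. e \<in> lt ` {e \<in> E. e \<inter> W \<noteq> {}} \<and> f \<in> lt ` E} x < \<infinity>"
proof -
  define SA where "SA = {(e, vs, f) \<in> saw_gen E1. e \<in> {e \<in> E1. e \<inter> (W \<times> K) \<noteq> {}}}"
  define S1 where "S1 = {(e, vs, f) \<in> saw_gen E1. e \<in> lt ` {e \<in> E. e \<inter> W \<noteq> {}} \<and> f \<in> lt ` E}"
  define wt where "wt = (\<lambda>\<pi>::('v \<times> 'g) set \<times> ('v \<times> 'g) list \<times> ('v \<times> 'g) set. ennreal x ^ length (fst (snd \<pi>)))"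
  define Fin where "Fin = {\<pi> \<in> SA. set (ml (fst \<pi>) (fst (snd \<pi>)) (snd (snd \<pi>))) \<inter> lt ` E = {}}"
  define Rest where "Rest = {\<pi> \<in> SA. set (ml (fst \<pi>) (fst (snd \<pi>)) (snd (snd \<pi>))) \<inter> lt ` E \<noteq> {}}"
  have ws: "\<And>S. walk_series S x = infsum wt S" by (simp add: walk_series_def wt_def)
  have S1SA: "S1 \<subseteq> SA"
  proof
    fix \<pi> assume "\<pi> \<in> S1"
    moreover obtain E' ws F' where h1: "\<pi> = (E', ws, F')" by (metis prod.collapse)
    ultimately have h2: "saw E1 E' ws F'" "E' \<in> lt ` {e \<in> E. e \<inter> W \<noteq> {}}"
      unfolding S1_def saw_gen_def by auto
    then obtain e where h3: "E' = lt e" "e \<in> E" "e \<inter> W \<noteq> {}" by blast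
    note h = h1 h2(1) h3
    obtain w where w: "w \<in> e" "w \<in> W" using h(5) by blast
    have "(w, port w e) \<in> lt e" using w(1) mem_lt by simp
    moreover have "port w e \<in> K" using port_in[OF h(4) w(1)] P_sub_K by blast
    ultimately have "E' \<inter> (W \<times> K) \<noteq> {}" using h(3) w(2) by blast
    moreover have "E' \<in> E1" using h(3,4) lt_in_E1 by simp
    ultimately show "\<pi> \<in> SA" using h(1,2) by (simp add: SA_def saw_gen_def)
  qed
  have SAsplit: "SA = Fin \<union> Rest" by (auto simp: Fin_def Rest_def)
  have finFin: "finite Fin" using fin_part[OF W] unfolding Fin_def SA_def .
  have FinLess: "infsum wt Fin < \<infinity>"
  proof -
    have "infsum wt Fin = sum wt Fin" using finFin by simp
    also have "\<dots> < \<infinity>" using finFin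
      by (simp add: wt_def infinity_ennreal_def power_less_top_ennreal)
    finally show ?thesis by simp
  qed
  define N where "N = (1 + 2 * card EH * card DL)^2"
  define C where "C = ennreal ((max 1 x) ^ (2 * card K))"
  define h where "h = (\<lambda>\<pi>. SOME \<tau>. \<tau> \<in> S1 \<and> \<pi> \<in> Img \<tau>)"
  have hprop: "\<And>\<pi>. \<pi> \<in> Rest \<Longrightarrow> h \<pi> \<in> S1 \<and> \<pi> \<in> Img (h \<pi>)"
  proof -
    fix \<pi> assume pR: "\<pi> \<in> Rest"
    obtain E' ws F' where \<pi>: "\<pi> = (E',ws,F')" by (metis prod.collapse)
    have s: "saw E1 E' ws F'" "E' \<in> E1" "E' \<inter> (W\<times>K) \<noteq> {}" "set (ml E' ws F') \<inter> lt ` E \<noteq> {}"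
      using pR \<pi> by (auto simp: Rest_def SA_def saw_gen_def)
    have "\<exists>e\<in>E. lt e \<in> set (ml E' ws F')" using s(4) by blast
    from rest_dec[OF s(1-3) this] have "\<exists>\<tau>. \<tau> \<in> S1 \<and> \<pi> \<in> Img \<tau>" unfolding S1_def \<pi> .
    then show "h \<pi> \<in> S1 \<and> \<pi> \<in> Img (h \<pi>)" unfolding h_def by (rule someI_ex)
  qed
  have RestLe: "infsum wt Rest \<le> of_nat N * C * infsum wt S1"
  proof (rule group_bound)
    show "\<And>a. a \<in> Rest \<Longrightarrow> h a \<in> S1" using hprop by blast
    show "finite {a \<in> Rest. h a = b} \<and> card {a \<in> Rest. h a = b} \<le> N" if b: "b \<in> S1" for b
    proof -
      obtain e M f where bb: "b = (lt e, M, lt f)" "e \<in> E" "f \<in> E"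
        using b unfolding S1_def saw_gen_def by auto
      have ci: "finite (Img b)" "card (Img b) \<le> N" using card_Img[OF bb(2,3), of M] bb(1) N_def by auto
      have "{a \<in> Rest. h a = b} \<subseteq> Img b" using hprop by blast
      then show ?thesis using ci by (meson card_mono finite_subset le_trans)
    qed
    show "wt a \<le> C * wt (h a)" if a: "a \<in> Rest" for a
    proof -
      have "a \<in> Img (h a)" using hprop[OF a] by blast
      from Img_len[OF this] obtain p s where ps: "p \<le> card K" "s \<le> card K"
        "length (fst (snd a)) = p + length (fst (snd (h a))) + s" by blast
      show ?thesis unfolding wt_def C_def ps(3) by (rule wt_bound[OF x ps(1,2)])
    qed
  qed
  show ?thesis unfolding SA_def[symmetric] S1_def[symmetric]
  proof
    assume "walk_series SA x < \<infinity>"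
    moreover have "infsum wt S1 \<le> infsum wt SA" using S1SA by (rule infsum_mono_enn)
    ultimately show "walk_series S1 x < \<infinity>" unfolding ws by simp
  next
    assume a: "walk_series S1 x < \<infinity>"
    have "infsum wt SA \<le> infsum wt Fin + infsum wt Rest" unfolding SAsplit by (rule infsum_Un_le_enn)
    also have "\<dots> \<le> infsum wt Fin + of_nat N * C * infsum wt S1" using RestLe by (rule add_left_mono)
    also have "\<dots> < \<infinity>"
    proof -
      have "of_nat N * C < \<infinity>" unfolding C_def by (simp add: ennreal_mult_less_top of_nat_less_top)
      moreover have "infsum wt S1 < \<infinity>" using a unfolding ws .
      ultimately have "of_nat N * C * infsum wt S1 < \<infinity>" by (simp add: ennreal_mult_less_top)
      then show ?thesis using FinLess by simp
    qed
    finally show "walk_series SA x < \<infinity>" unfolding ws .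
  qed
qed

end


theorem mainTheorem2:
  fixes V :: "'v set" and E :: "'v set set" and W :: "'v set"
    and K :: "'g set" and EH :: "'g set set" and w1 w2 w3 :: 'g
    and port :: "'v \<Rightarrow> 'v set \<Rightarrow> 'g"
  assumes "simple_graph V E" and "infinite V" and "connected_graph V E" and "cubic V E"
    and "fundamental_domain V E W"
    and "gadget K EH w1 w2 w3"
    and "port_assignment V E {w1, w2, w3} port"
  defines "X \<equiv> {e \<in> E. e \<inter> W \<noteq> {}}"
    and "E1 \<equiv> lt_edges V E EH port"
    and "X1 \<equiv> {e \<in> lt_edges V E EH port. e \<inter> (W \<times> K) \<noteq> {}}"
  shows "(\<forall>x::real. x > 0 \<longrightarrow>
            walk_series {(e, vs, f) \<in> saw_gen E. e \<in> X} (gadget_series V E K EH port x)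
          = walk_series {(e, vs, f) \<in> saw_gen E1. e \<in> lt_edge port ` X \<and> f \<in> lt_edge port ` E} x)
       \<and> (\<forall>x::real. x > 0 \<longrightarrow>
            (walk_series {(e, vs, f) \<in> saw_gen E1. e \<in> X1} x < \<infinity>
             \<longleftrightarrow> walk_series {(e, vs, f) \<in> saw_gen E1. e \<in> lt_edge port ` X \<and> f \<in> lt_edge port ` E} x < \<infinity>))"
proof -
  interpret L: LT V E K EH w1 w2 w3 port
    using assms(1,4,6,7) by unfold_locales
  have Vne: "V \<noteq> {}" using assms(2) by auto
  have XE: "X \<subseteq> E" unfolding X_def by auto
  have Wfin: "finite W" using assms(5) by (simp add: fundamental_domain_def)
  show ?thesis
  proof (intro conjI allI impI)
    fix x :: real assume x: "x > 0"
    show "walk_series {(e, vs, f) \<in> saw_gen E. e \<in> X} (gadget_series V E K EH port x)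
          = walk_series {(e, vs, f) \<in> saw_gen E1. e \<in> lt_edge port ` X \<and> f \<in> lt_edge port ` E} x"
      unfolding E1_def by (rule L.part1[OF XE Vne x])
  next
    fix x :: real assume x: "x > 0"
    show "walk_series {(e, vs, f) \<in> saw_gen E1. e \<in> X1} x < \<infinity>
             \<longleftrightarrow> walk_series {(e, vs, f) \<in> saw_gen E1. e \<in> lt_edge port ` X \<and> f \<in> lt_edge port ` E} x < \<infinity>"
      unfolding X1_def E1_def X_def by (rule L.part2[OF Wfin x])
  qed
qed


end
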